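(* Let $d\ge1$, $\mathcal{X}={\mathbb R}^d/{\mathbb Z}^d$, $\theta\in(-1/2,1/2)^d$, and for $\varepsilon>0$ let $T^\varepsilon$ be the operator on $L^2(\mathcal{X})$ (Lebesgue measure) defined in the context. Then for every $\varepsilon>0$ the functions $\varphi_k(x)=e^{2\pi i k\cdot x}$, $k\in{\mathbb Z}^d$, form a complete system of eigenfunctions of $T^\varepsilon$, and the corresponding eigenvalues $\lambda^\varepsilon_k$ satisfy $$\big|\lambda^\varepsilon_k-e^{-\pi^2\varepsilon|k|^2}\lambda_k\big|\le 2^{d+1}e^{-\frac{1}{8\varepsilon}},\qquad \lambda_k=e^{-2\pi i k\cdot\theta},$$ uniformly for $0<\varepsilon<1/(8(d+2)\ln 2)$ (and all $k\in{\mathbb Z}^d$).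
   Context: On the torus use the distance $\mathrm{d}(x,x')=\min_{k\in{\mathbb Z}^d}|\hat x'-\hat x+k|$ for representatives $\hat x,\hat x'\in{\mathbb R}^d$. Let $\mathbf{C}=(-1/2,1/2]^d$. $T^\varepsilon$ is the entropically regularized transfer operator of the shift map $F(x)=x+\theta$ with respect to the uniform (invariant) measure, which here is the integral operator $(T^\varepsilon h)(y)=\int_{\mathcal{X}} h(x)\,t^\varepsilon(x,y)\,\mathrm{d}x$ with kernel $t^\varepsilon(x,y)=\frac{1}{Z_\varepsilon}e^{-\mathrm{d}(x+\theta,y)^2/\varepsilon}$, $Z_\varepsilon=\varepsilon^{d/2}\int_{\varepsilon^{-1/2}\mathbf{C}}e^{-|\zeta|^2}\,\mathrm{d}\zeta$. *)

theory Defs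
  imports "HOL-Analysis.Analysis"
begin

text \<open>Points of the torus R^d/Z^d are represented by representatives in R^d
 (type real^'d, d = CARD('d)); functions on the torus by functions on R^d,
 integrated over the fundamental domain C = (-1/2,1/2]^d with Lebesgue measure.\<close>

definition int_lattice :: "(real ^ 'd) set" where
  "int_lattice = {k. \<forall>i. k $ i \<in> \<int>}"

definition torus_dist :: "real ^ 'd \<Rightarrow> real ^ 'd \<Rightarrow> real" where
  "torus_dist x x' = (INF k\<in>int_lattice. norm (x' - x + k))"

definition cube :: "(real ^ 'd) set" where
  "cube = {x. \<forall>i. -1/2 < x $ i \<and> x $ i \<le> 1/2}"

definition Zeps :: "real \<Rightarrow> ('d::finite) itself \<Rightarrow> real" where
  "Zeps \<epsilon> _ = \<epsilon> powr (real CARD('d) / 2) *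
     (LINT \<zeta>|lebesgue_on ((\<lambda>x. \<epsilon> powr (-1/2) *\<^sub>R x) ` (cube :: (real^'d) set)).
        exp (- (norm \<zeta>)\<^sup>2))"

definition teps :: "real \<Rightarrow> real ^ 'd \<Rightarrow> real ^ 'd \<Rightarrow> real ^ 'd \<Rightarrow> real" where
  "teps \<epsilon> \<theta> x y = exp (- (torus_dist (x + \<theta>) y)\<^sup>2 / \<epsilon>) / Zeps \<epsilon> TYPE('d)"

definition Teps :: "real \<Rightarrow> real ^ 'd \<Rightarrow> (real ^ 'd \<Rightarrow> complex) \<Rightarrow> real ^ 'd \<Rightarrow> complex" where
  "Teps \<epsilon> \<theta> h y = (LINT x|lebesgue_on cube. h x * complex_of_real (teps \<epsilon> \<theta> x y))"

definition fourier_mode :: "real ^ 'd \<Rightarrow> real ^ 'd \<Rightarrow> complex" where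
  "fourier_mode k x = exp (2 * pi * \<i> * complex_of_real (k \<bullet> x))"

end

theory Submission
  imports Defs "HOL-Probability.Probability"
begin


lemma gauss_char:
  fixes a c :: real assumes c: "c > 0"
  shows "integrable lborel (\<lambda>t. exp (\<i> * complex_of_real (a * t)) * complex_of_real (exp (- t\<^sup>2 / c)))"
    and "(LINT t|lborel. exp (\<i> * complex_of_real (a * t)) * complex_of_real (exp (- t\<^sup>2 / c)))
         = complex_of_real (sqrt (pi * c) * exp (- a\<^sup>2 * c / 4))"
proof -
  define s where "s = sqrt (c/2)"
 have sqrt2: "sqrt (pi * 2) * sqrt (c / 2) = sqrt (pi * c)"
    by (simp add: real_sqrt_mult[symmetric])
  have s: "s > 0" "s\<^sup>2 = c/2" using c by (auto simp: s_def)
  define f where "f = (\<lambda>t. exp (\<i> * complex_of_real (a * t)) * complex_of_real (exp (- t\<^sup>2 / c)))"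
  have fs: "f (0 + s * x) = complex_of_real (sqrt (2*pi)) * (std_normal_density x *\<^sub>R iexp (a * s * x))" for x
  proof -
    have cs: "c = 2 * s\<^sup>2" using s by simp
    show ?thesis
    using s(1) by (simp add: f_def cs std_normal_density_def power_mult_distrib scaleR_conv_of_real mult_ac)
  qed
  have "char std_normal_distribution (a * s) = exp (- ((a * s)^2) / 2)"
    by (simp add: char_std_normal_distribution)
  then have 1: "(CLINT x|lborel. std_normal_density x *\<^sub>R iexp (a * s * x)) = exp (- ((a * s)^2) / 2)"
    unfolding char_def
    by (subst (asm) integral_density) (auto simp: normal_density_nonneg)
  have int1: "integrable lborel (\<lambda>x. std_normal_density x *\<^sub>R iexp (a * s * x))"
    by (rule Bochner_Integration.integrable_bound[where f="std_normal_density"]) 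
       (auto simp: norm_exp_i_times normal_density_nonneg)
  have "integrable lborel (\<lambda>x. f (0 + s * x))"
    unfolding fs by (intro integrable_mult_right int1)
  then show "integrable lborel f" unfolding f_def[symmetric]
    using lborel_integrable_real_affine_iff[of s f 0] s by simp
  have "(LINT t|lborel. f t) = \<bar>s\<bar> *\<^sub>R (LINT x|lborel. f (0 + s * x))"
    by (rule lborel_integral_real_affine) (use s in auto)
  also have "\<dots> = s *\<^sub>R (complex_of_real (sqrt (2*pi)) * exp (- ((a * s)^2) / 2))"
    unfolding fs integral_mult_right_zero 1 using s by simp
  also have "\<dots> = complex_of_real (s * sqrt (2*pi) * exp (- ((a * s)^2) / 2))"
    by (simp add: scaleR_conv_of_real)
  also have "s * sqrt (2*pi) * exp (- ((a * s)^2) / 2) = sqrt (pi * c) * exp (- a\<^sup>2 * c / 4)"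
  proof -
    have "s * sqrt (2*pi) = sqrt (pi * c)" unfolding s_def by (simp add: real_sqrt_mult[symmetric])
    moreover have "- ((a * s)^2) / 2 = - a\<^sup>2 * c / 4" using s(2) by (simp add: power_mult_distrib)
    ultimately show ?thesis by simp
  qed
  finally show "(LINT t|lborel. exp (\<i> * complex_of_real (a * t)) * complex_of_real (exp (- t\<^sup>2 / c)))
         = complex_of_real (sqrt (pi * c) * exp (- a\<^sup>2 * c / 4))" unfolding f_def .
qed


lemma prod_integral_euclidean:
  fixes G :: "'a::euclidean_space \<Rightarrow> real \<Rightarrow> complex"
  assumes int: "\<And>b. b \<in> Basis \<Longrightarrow> integrable lborel (G b)"
  shows "integrable lborel (\<lambda>x::'a. \<Prod>b\<in>Basis. G b (x \<bullet> b))"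
    and "integral\<^sup>L lborel (\<lambda>x. \<Prod>b\<in>Basis. G b (x \<bullet> b)) = (\<Prod>b\<in>Basis. integral\<^sup>L lborel (G b))"
proof -
  interpret product_sigma_finite "\<lambda>_::'a. lborel :: real measure" by standard
  have meas [measurable]: "(\<lambda>x::'a. \<Prod>b\<in>Basis. G b (x \<bullet> b)) \<in> borel_measurable borel"
    using int by (intro borel_measurable_prod) (auto dest!: borel_measurable_integrable)
  have T [measurable]: "(\<lambda>f. \<Sum>b\<in>Basis. f b *\<^sub>R b) \<in> measurable (\<Pi>\<^sub>M b\<in>Basis. lborel) (borel :: 'a measure)"
    by measurable
  have eq: "(\<Prod>b\<in>Basis. G b ((\<Sum>b'\<in>Basis. f b' *\<^sub>R b') \<bullet> b)) = (\<Prod>b\<in>Basis. G b (f b))" for f :: "'a \<Rightarrow> real"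
    by (intro prod.cong refl) (simp add: inner_sum_left inner_Basis if_distrib sum.delta cong: if_cong)
  show "integrable lborel (\<lambda>x::'a. \<Prod>b\<in>Basis. G b (x \<bullet> b))"
    apply (subst lborel_eq)
    apply (subst integrable_distr_eq[OF T meas])
    unfolding eq
    by (rule product_integrable_prod) (auto intro: int)
  show "integral\<^sup>L lborel (\<lambda>x. \<Prod>b\<in>Basis. G b (x \<bullet> b)) = (\<Prod>b\<in>Basis. integral\<^sup>L lborel (G b))"
    apply (subst lborel_eq)
    apply (subst integral_distr[OF T meas])
    unfolding eq
    by (rule product_integral_prod) (auto intro: int)
qed

lemma Basis_vec_real: "(Basis :: (real^'d) set) = (\<lambda>i. axis i 1) ` UNIV"
  by (auto simp: Basis_vec_def)

lemma prod_integral_vec: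
  fixes G :: "'d::finite \<Rightarrow> real \<Rightarrow> complex"
  assumes int: "\<And>i. integrable lborel (G i)"
  shows "integrable lborel (\<lambda>x::real^'d. \<Prod>i\<in>UNIV. G i (x $ i))"
    and "integral\<^sup>L lborel (\<lambda>x::real^'d. \<Prod>i\<in>UNIV. G i (x $ i)) = (\<Prod>i\<in>UNIV. integral\<^sup>L lborel (G i))"
proof -
  define G' where "G' = (\<lambda>b::real^'d. G (SOME i. b = axis i 1))"
  have inj: "inj (\<lambda>i::'d. axis i (1::real))"
    by (auto intro!: injI simp: axis_eq_axis)
  have G'a: "G' (axis i 1) = G i" for i
    unfolding G'_def by (rule arg_cong[where f=G]) (use inj in \<open>auto dest: injD\<close>)
  have P: "(\<Prod>b\<in>Basis. H b) = (\<Prod>i\<in>UNIV. H (axis i 1))" for H :: "real^'d \<Rightarrow> complex"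
    unfolding Basis_vec_real by (subst prod.reindex[OF inj]) simp
  have *: "(\<Prod>b\<in>Basis. G' b (x \<bullet> b)) = (\<Prod>i\<in>UNIV. G i (x $ i))" for x :: "real^'d"
    unfolding P G'a by (simp add: cart_eq_inner_axis)
  have int': "b \<in> Basis \<Longrightarrow> integrable lborel (G' b)" for b
    unfolding Basis_vec_real using G'a int by auto
  show "integrable lborel (\<lambda>x::real^'d. \<Prod>i\<in>UNIV. G i (x $ i))"
    using prod_integral_euclidean(1)[of G', OF int'] unfolding * .
  show "integral\<^sup>L lborel (\<lambda>x::real^'d. \<Prod>i\<in>UNIV. G i (x $ i)) = (\<Prod>i\<in>UNIV. integral\<^sup>L lborel (G i))"
    using prod_integral_euclidean(2)[of G', OF int'] unfolding * P G'a .
qed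


section \<open>Lattice and Fourier modes\<close>

lemma int_lattice_add: "k \<in> int_lattice \<Longrightarrow> l \<in> int_lattice \<Longrightarrow> k + l \<in> int_lattice"
  by (auto simp: int_lattice_def)
lemma int_lattice_uminus: "k \<in> int_lattice \<Longrightarrow> - k \<in> int_lattice"
  by (auto simp: int_lattice_def)
lemma int_lattice_diff: "k \<in> int_lattice \<Longrightarrow> l \<in> int_lattice \<Longrightarrow> k - l \<in> int_lattice"
  by (auto simp: int_lattice_def)
lemma zero_in_int_lattice: "0 \<in> int_lattice"
  by (auto simp: int_lattice_def)
lemma axis_in_int_lattice: "axis j 1 \<in> int_lattice"
  by (auto simp: int_lattice_def axis_def)

lemma inner_int_lattice: "k \<in> int_lattice \<Longrightarrow> m \<in> int_lattice \<Longrightarrow> k \<bullet> m \<in> \<int>"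
  unfolding int_lattice_def inner_vec_def by (auto intro!: Ints_sum Ints_mult)

lemma exp_2pi_int: "r \<in> \<int> \<Longrightarrow> exp (2 * pi * \<i> * complex_of_real r) = 1"
proof (elim Ints_cases)
  fix n :: int assume "r = of_int n"
  then show ?thesis by (auto simp: exp_eq_1 intro!: exI[where x=n])
qed

lemma exp_2pi_eq_imp: "exp (2 * pi * \<i> * complex_of_real a) = exp (2 * pi * \<i> * complex_of_real b) \<Longrightarrow> a - b \<in> \<int>"
proof -
  assume h: "exp (2 * pi * \<i> * complex_of_real a) = exp (2 * pi * \<i> * complex_of_real b)"
  have "exp (2 * pi * \<i> * complex_of_real (a - b)) = exp (2 * pi * \<i> * complex_of_real a) / exp (2 * pi * \<i> * complex_of_real b)"
    by (simp add: exp_diff[symmetric] algebra_simps)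
  also have "\<dots> = 1" using h by simp
  finally obtain n :: int where "2 * pi * (a - b) = real_of_int (2 * n) * pi"
    by (auto simp: exp_eq_1)
  then have "a - b = of_int n" by simp
  then show ?thesis by simp
qed

lemma fourier_mode_add: "fourier_mode (k + l) x = fourier_mode k x * fourier_mode l x"
  unfolding fourier_mode_def by (simp add: inner_add_left distrib_left exp_add[symmetric])

lemma fourier_mode_zero [simp]: "fourier_mode 0 x = 1"
  unfolding fourier_mode_def by simp

lemma fourier_mode_cnj: "cnj (fourier_mode k x) = fourier_mode (-k) x"
  unfolding fourier_mode_def by (simp add: exp_cnj)

lemma fourier_mode_periodic:
  assumes "k \<in> int_lattice" "m \<in> int_lattice"
  shows "fourier_mode k (x + m) = fourier_mode k x"
proof -
  have "fourier_mode k (x + m) = fourier_mode k x * exp (2 * pi * \<i> * complex_of_real (k \<bullet> m))"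
    unfolding fourier_mode_def by (simp add: inner_add_right distrib_left exp_add[symmetric])
  also have "exp (2 * pi * \<i> * complex_of_real (k \<bullet> m)) = 1"
    by (rule exp_2pi_int) (rule inner_int_lattice[OF assms])
  finally show ?thesis by simp
qed

lemma fourier_mode_diff: "fourier_mode k (a - x) = fourier_mode k a * fourier_mode (-k) x"
  unfolding fourier_mode_def by (simp add: inner_diff_right right_diff_distrib exp_diff exp_minus field_simps)

lemma continuous_fourier_mode [continuous_intros]: "continuous_on A (fourier_mode k)"
  unfolding fourier_mode_def by (intro continuous_intros)

lemma norm_fourier_mode [simp]: "norm (fourier_mode k x) = 1"
  unfolding fourier_mode_def by (simp add: norm_exp_i_times mult.commute[of _ \<i>] mult.assoc)

section \<open>Trigonometric polynomials\<close>

inductive_set trig :: "(real ^ 'd \<Rightarrow> complex) set" where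
  mode: "k \<in> int_lattice \<Longrightarrow> fourier_mode k \<in> trig"
| add: "f \<in> trig \<Longrightarrow> g \<in> trig \<Longrightarrow> (\<lambda>x. f x + g x) \<in> trig"
| smult: "f \<in> trig \<Longrightarrow> (\<lambda>x. c * f x) \<in> trig"

lemma trig_const: "(\<lambda>x. c) \<in> trig"
  using trig.smult[OF trig.mode[OF zero_in_int_lattice], of c] by simp

lemma trig_sum: "finite A \<Longrightarrow> (\<And>a. a \<in> A \<Longrightarrow> f a \<in> trig) \<Longrightarrow> (\<lambda>x. \<Sum>a\<in>A. f a x) \<in> trig"
  by (induction A rule: finite_induct) (auto intro: trig_const trig.add)

lemma trig_mult_mode:
  assumes "g \<in> trig" "k \<in> int_lattice"
  shows "(\<lambda>x. fourier_mode k x * g x) \<in> trig"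
  using assms(1)
proof induction
  case (mode l)
  have "(\<lambda>x. fourier_mode k x * fourier_mode l x) = fourier_mode (k + l)"
    by (simp add: fourier_mode_add fun_eq_iff)
  then show ?case using trig.mode[OF int_lattice_add[OF assms(2) mode]] by simp
next
  case (add f g)
  then show ?case using trig.add[OF add.IH] by (simp add: distrib_left)
next
  case (smult f c)
  then show ?case using trig.smult[OF smult.IH, of c] by (simp add: mult.left_commute)
qed

lemma trig_mult:
  assumes "f \<in> trig" "g \<in> trig"
  shows "(\<lambda>x. f x * g x) \<in> trig"
  using assms(1)
proof induction
  case (mode k)
  then show ?case using trig_mult_mode[OF assms(2) mode] by simp
next
  case (add f1 f2)
  then show ?case using trig.add[OF add.IH] by (simp add: distrib_right)
next
  case (smult f c)
  then show ?case using trig.smult[OF smult.IH, of c] by (simp add: mult.assoc)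
qed

lemma trig_continuous: "t \<in> trig \<Longrightarrow> continuous_on A t"
  by (induction rule: trig.induct) (auto intro!: continuous_intros)

lemma trig_periodic: "t \<in> trig \<Longrightarrow> m \<in> int_lattice \<Longrightarrow> t (x + m) = t x"
  by (induction rule: trig.induct) (auto simp: fourier_mode_periodic)

section \<open>Embedding of the torus\<close>

definition Emap :: "real ^ 'd \<Rightarrow> complex ^ 'd" where
  "Emap x = (\<chi> j. exp (2 * pi * \<i> * complex_of_real (x $ j)))"

lemma Emap_eq_imp: "Emap x = Emap y \<Longrightarrow> x - y \<in> int_lattice"
  unfolding int_lattice_def
  by (auto simp: Emap_def vec_eq_iff intro: exp_2pi_eq_imp)

lemma Emap_periodic: "m \<in> int_lattice \<Longrightarrow> Emap (x + m) = Emap x"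
proof -
  assume m: "m \<in> int_lattice"
  have "exp (2 * pi * \<i> * complex_of_real ((x + m) $ j)) = exp (2 * pi * \<i> * complex_of_real (x $ j))" for j
  proof -
    have "exp (2 * pi * \<i> * complex_of_real ((x + m) $ j))
        = exp (2 * pi * \<i> * complex_of_real (x $ j)) * exp (2 * pi * \<i> * complex_of_real (m $ j))"
      by (simp only: vector_add_component of_real_add distrib_left exp_add)
    also have "exp (2 * pi * \<i> * complex_of_real (m $ j)) = 1"
      using m by (intro exp_2pi_int) (auto simp: int_lattice_def)
    finally show ?thesis by simp
  qed
  then show ?thesis unfolding Emap_def by (simp add: vec_eq_iff)
qed

lemma continuous_Emap [continuous_intros]: "continuous_on A Emap"
  unfolding Emap_def
  by (intro continuous_on_vec_lambda continuous_intros continuous_on_component)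

definition ccube :: "(real ^ 'd) set" where
  "ccube = cbox (\<chi> _. -1/2) (\<chi> _. 1/2)"

lemma mem_ccube: "x \<in> ccube \<longleftrightarrow> (\<forall>i. -1/2 \<le> x $ i \<and> x $ i \<le> 1/2)"
  unfolding ccube_def by (auto simp: mem_box_cart)

lemma compact_ccube: "compact ccube"
  unfolding ccube_def by simp

lemma cube_subset_ccube: "cube \<subseteq> ccube"
proof
  fix x :: "real^'d" assume "x \<in> cube"
  then have h: "-1/2 < x $ i \<and> x $ i \<le> 1/2" for i by (auto simp: cube_def)
  show "x \<in> ccube" unfolding mem_ccube by (meson h less_imp_le)
qed

lemma reduce_cube:
  fixes x :: "real ^ 'd"
  shows "\<exists>m\<in>int_lattice. x - m \<in> cube"
proof -
  define m :: "real^'d" where "m = (\<chi> i. of_int \<lceil>x $ i - 1/2\<rceil>)"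
  have "m \<in> int_lattice" by (auto simp: m_def int_lattice_def)
  moreover have "x - m \<in> cube"
  proof -
    have "-1/2 < x $ i - m $ i \<and> x $ i - m $ i \<le> 1/2" for i
    proof -
      have "of_int \<lceil>x $ i - 1/2\<rceil> - 1 < x $ i - 1/2" "x $ i - 1/2 \<le> of_int \<lceil>x $ i - 1/2\<rceil>"
        using ceiling_correct[of "x $ i - 1/2"] by auto
      then show ?thesis unfolding m_def vec_lambda_beta by linarith
    qed
    then show ?thesis by (auto simp: cube_def)
  qed
  ultimately show ?thesis by blast
qed

lemma range_Emap: "range Emap = Emap ` ccube"
proof
  show "range Emap \<subseteq> Emap ` ccube"
  proof
    fix s assume "s \<in> range Emap"
    then obtain x where s: "s = Emap x" by auto
    obtain m where m: "m \<in> int_lattice" "x - m \<in> cube" using reduce_cube by blast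
    have "Emap (x - m) = s" using Emap_periodic[OF int_lattice_uminus[OF m(1)], of x] s by simp
    then show "s \<in> Emap ` ccube" using m cube_subset_ccube by blast
  qed
qed auto

lemma compact_Emap_ccube: "compact (Emap ` ccube)"
  by (intro compact_continuous_image continuous_Emap compact_ccube)

lemma quotient_extend:
  fixes g :: "real ^ 'd \<Rightarrow> 'b::real_normed_vector"
  assumes cont: "continuous_on ccube g"
    and resp: "\<And>x y. x \<in> ccube \<Longrightarrow> y \<in> ccube \<Longrightarrow> Emap x = Emap y \<Longrightarrow> g x = g y"
  obtains F where "continuous_on (Emap ` ccube) F" "\<And>x. x \<in> ccube \<Longrightarrow> F (Emap x) = g x"
proof -
  define F where "F s = g (SOME x. x \<in> ccube \<and> Emap x = s)" for s
  have FE: "F (Emap x) = g x" if "x \<in> ccube" for x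
  proof -
    have "\<exists>y. y \<in> ccube \<and> Emap y = Emap x" using that by blast
    then have "(SOME y. y \<in> ccube \<and> Emap y = Emap x) \<in> ccube \<and> Emap (SOME y. y \<in> ccube \<and> Emap y = Emap x) = Emap x"
      by (rule someI_ex)
    then show ?thesis unfolding F_def using resp that by blast
  qed
  have q: "quotient_map (top_of_set ccube) (top_of_set (Emap ` ccube)) Emap"
  proof (rule continuous_imp_quotient_map)
    show "continuous_map (top_of_set ccube) (top_of_set (Emap ` ccube)) Emap"
      by (simp add: continuous_map_in_subtopology continuous_Emap image_mono)
    show "compact_space (top_of_set ccube)"
      by (simp add: compact_space_subtopology compactin_euclidean_iff compact_ccube)
    show "Hausdorff_space (top_of_set (Emap ` ccube))"
      by (simp add: Hausdorff_space_subtopology Hausdorff_space_euclidean)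
  qed simp
  have "continuous_map (top_of_set ccube) euclidean (F \<circ> Emap)"
    unfolding continuous_map_iff_continuous
    using cont by (rule continuous_on_eq) (simp add: FE)
  then have "continuous_map (top_of_set (Emap ` ccube)) euclidean F"
    by (rule continuous_compose_quotient_map[OF q])
  then have "continuous_on (Emap ` ccube) F"
    by (simp add: continuous_map_iff_continuous)
  then show ?thesis using that FE by blast
qed

lemma sum_scaleR_delta: "(\<Sum>x\<in>UNIV. (a x :: real) *\<^sub>R (if i = x then u else (0::'b::real_vector))) = a (i::'d::finite) *\<^sub>R u"
proof -
  have "(\<Sum>x\<in>UNIV. a x *\<^sub>R (if i = x then u else 0)) = (\<Sum>x\<in>UNIV. if i = x then a x *\<^sub>R u else 0)"
    by (intro sum.cong) auto
  also have "\<dots> = a i *\<^sub>R u" by (simp add: sum.delta)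
  finally show ?thesis .
qed

lemma linear_decomp:
  fixes p :: "complex ^ 'd \<Rightarrow> real"
  assumes "bounded_linear p"
  shows "p z = (\<Sum>j\<in>UNIV. Re (z $ j) * p (axis j 1) + Im (z $ j) * p (axis j \<i>))"
proof -
  interpret linear p using assms by (rule bounded_linear.linear)
  have "z = (\<Sum>j\<in>UNIV. Re (z $ j) *\<^sub>R axis j 1 + Im (z $ j) *\<^sub>R axis j \<i>)"
    apply (simp add: vec_eq_iff sum_component axis_def sum.distrib sum_scaleR_delta del: scaleR_conv_of_real)
    apply (simp add: complex_eq_iff)
    done
  then have "p z = p (\<Sum>j\<in>UNIV. Re (z $ j) *\<^sub>R axis j 1 + Im (z $ j) *\<^sub>R axis j \<i>)" by simp
  also have "\<dots> = (\<Sum>j\<in>UNIV. Re (z $ j) * p (axis j 1) + Im (z $ j) * p (axis j \<i>))"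
    by (simp add: sum add scale)
  finally show ?thesis .
qed

lemma Emap_component: "Emap x $ j = fourier_mode (axis j 1) x"
  unfolding Emap_def fourier_mode_def by (simp add: inner_axis' )

lemma real_poly_trig:
  assumes "real_polynomial_function p"
  shows "(\<lambda>x. complex_of_real (p (Emap x))) \<in> trig"
  using assms
proof induction
  case (linear f)
  have re: "complex_of_real (Re w) = (w + cnj w) / 2" for w
    by (simp add: complex_eq_iff)
  have im: "complex_of_real (Im w) = (w - cnj w) / (2 * \<i>)" for w
    by (simp add: complex_eq_iff)
  have *: "complex_of_real (f (Emap x)) = (\<Sum>j\<in>UNIV.
      (fourier_mode (axis j 1) x + fourier_mode (- axis j 1) x) / 2 * f (axis j 1)
    + (fourier_mode (axis j 1) x - fourier_mode (- axis j 1) x) / (2 * \<i>) * f (axis j \<i>))" for x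
    unfolding linear_decomp[OF linear, of "Emap x"] of_real_sum of_real_add of_real_mult re im
      Emap_component fourier_mode_cnj ..
  have **: "(fourier_mode (axis j 1) x + fourier_mode (- axis j 1) x) / 2 * complex_of_real (f (axis j 1))
    + (fourier_mode (axis j 1) x - fourier_mode (- axis j 1) x) / (2 * \<i>) * complex_of_real (f (axis j \<i>))
    = (complex_of_real (f (axis j 1)) / 2 + complex_of_real (f (axis j \<i>)) / (2 * \<i>)) * fourier_mode (axis j 1) x
    + (complex_of_real (f (axis j 1)) / 2 - complex_of_real (f (axis j \<i>)) / (2 * \<i>)) * fourier_mode (- axis j 1) x"
    for j x by (simp add: field_simps)
  show ?case unfolding * **
    by (intro trig_sum trig.add trig.smult trig.mode int_lattice_uminus axis_in_int_lattice) simp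
next
  case (const c)
  then show ?case by (rule trig_const)
next
  case (add f g)
  then show ?case by (simp add: trig.add)
next
  case (mult f g)
  then show ?case by (simp add: trig_mult)
qed

lemma poly_trig:
  fixes g :: "complex ^ 'd \<Rightarrow> complex"
  assumes "polynomial_function g"
  shows "(\<lambda>x. g (Emap x)) \<in> trig"
proof -
  have "real_polynomial_function (Re \<circ> g)" "real_polynomial_function (Im \<circ> g)"
    using assms unfolding polynomial_function_def by (auto intro: bounded_linear_Re bounded_linear_Im)
  then have "(\<lambda>x. complex_of_real ((Re \<circ> g) (Emap x))) \<in> trig" "(\<lambda>x. complex_of_real ((Im \<circ> g) (Emap x))) \<in> trig"
    by (simp_all only: real_poly_trig)
  then have "(\<lambda>x. complex_of_real (Re (g (Emap x)))) \<in> trig" "(\<lambda>x. complex_of_real (Im (g (Emap x)))) \<in> trig"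
    by simp_all
  then have "(\<lambda>x. complex_of_real (Re (g (Emap x))) + \<i> * complex_of_real (Im (g (Emap x)))) \<in> trig"
    by (auto intro!: trig.add trig.smult)
  then show ?thesis by (simp add: complex_eq[symmetric])
qed

lemma trig_approx:
  fixes F :: "complex ^ 'd \<Rightarrow> complex"
  assumes "continuous_on (Emap ` ccube) F" "e > 0"
  obtains t where "t \<in> trig" "\<And>x. norm (F (Emap x) - t x) < e"
proof -
  obtain g where g: "polynomial_function g" "\<And>s. s \<in> Emap ` ccube \<Longrightarrow> norm (F s - g s) < e"
    using Stone_Weierstrass_polynomial_function[OF compact_Emap_ccube assms] by blast
  have "norm (F (Emap x) - g (Emap x)) < e" for x
    using g(2) range_Emap by blast
  then show ?thesis using that poly_trig[OF g(1)] by blast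
qed


lemma integral_lebesgue_on_borel:
  fixes f :: "'a::euclidean_space \<Rightarrow> 'b::{banach, second_countable_topology}"
  assumes S: "S \<in> sets borel" and f: "f \<in> borel_measurable borel"
  shows "integral\<^sup>L (lebesgue_on S) f = integral\<^sup>L lborel (\<lambda>x. indicator S x *\<^sub>R f x)"
proof -
  have "integral\<^sup>L (lebesgue_on S) f = integral\<^sup>L lebesgue (\<lambda>x. indicator S x *\<^sub>R f x)"
    using S by (intro integral_restrict_space) auto
  also have "\<dots> = integral\<^sup>L lborel (\<lambda>x. indicator S x *\<^sub>R f x)"
    using S f by (intro integral_completion) auto
  finally show ?thesis .
qed

lemma integrable_lebesgue_on_borel:
  fixes f :: "'a::euclidean_space \<Rightarrow> 'b::{banach, second_countable_topology}"
  assumes S: "S \<in> sets borel" and f: "f \<in> borel_measurable borel"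
  shows "integrable (lebesgue_on S) f \<longleftrightarrow> integrable lborel (\<lambda>x. indicator S x *\<^sub>R f x)"
proof -
  have "integrable (lebesgue_on S) f \<longleftrightarrow> integrable lebesgue (\<lambda>x. indicator S x *\<^sub>R f x)"
    using S by (intro integrable_restrict_space) auto
  also have "\<dots> \<longleftrightarrow> integrable lborel (\<lambda>x. indicator S x *\<^sub>R f x)"
    using S f by (intro integrable_completion) auto
  finally show ?thesis .
qed

definition hbox :: "real \<Rightarrow> real \<Rightarrow> (real ^ 'd) set" where
  "hbox a b = {x. \<forall>i. a < x $ i \<and> x $ i \<le> b}"

lemma cube_hbox: "cube = hbox (-1/2) (1/2)"
  by (auto simp: cube_def hbox_def)

lemma hbox_borel [measurable]: "hbox a b \<in> sets borel"
proof -
  have "hbox a b = (\<Inter>i. {x::real^'d. a < x $ i} \<inter> {x. x $ i \<le> b})"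
    by (auto simp: hbox_def)
  also have "\<dots> \<in> sets borel"
    by (intro sets.finite_INT) (auto intro!: borel_open borel_closed open_Collect_less closed_Collect_le continuous_intros)
  finally show ?thesis .
qed

lemma cube_borel [measurable]: "cube \<in> sets borel"
  unfolding cube_hbox by (rule hbox_borel)

lemma indicator_hbox: "indicator (hbox a b) x = (\<Prod>i\<in>UNIV. indicator {a<..b} (x $ i) :: real)"
proof (cases "x \<in> hbox a b")
  case True
  then show ?thesis by (auto simp: hbox_def indicator_def)
next
  case False
  then obtain i where "x $ i \<notin> {a<..b}" by (auto simp: hbox_def)
  then have "indicator {a<..b} (x $ i) = (0::real)" by simp
  then have "(\<Prod>i\<in>UNIV. indicator {a<..b} (x $ i) :: real) = 0"
    by (intro prod_zero) auto
  then show ?thesis using False by simp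
qed

lemma integral_Ioc_Icc:
  fixes f :: "real \<Rightarrow> 'b::{banach, second_countable_topology}"
  assumes "f \<in> borel_measurable borel"
  shows "integral\<^sup>L lborel (\<lambda>t. indicator {a<..b} t *\<^sub>R f t) = integral\<^sup>L lborel (\<lambda>t. indicator {a..b} t *\<^sub>R f t)"
  using assms
  by (intro integral_cong_AE) (auto intro!: eventually_mono[OF AE_lborel_singleton[of a]] split: split_indicator)

lemma integrable_Icc_continuous:
  fixes f :: "real \<Rightarrow> 'b::{banach, second_countable_topology}"
  assumes "continuous_on UNIV f"
  shows "integrable lborel (\<lambda>t. indicator {a..b} t *\<^sub>R f t)"
    and "integrable lborel (\<lambda>t. indicator {a<..b} t *\<^sub>R f t)"
proof -
  show 1: "integrable lborel (\<lambda>t. indicator {a..b} t *\<^sub>R f t)"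
    by (rule borel_integrable_compact) (auto intro: continuous_on_subset[OF assms])
  have "integrable lborel (\<lambda>t. indicator {a<..b} t *\<^sub>R (indicator {a..b} t *\<^sub>R f t))"
    by (rule integrable_mult_indicator) (auto intro: 1)
  moreover have "(\<lambda>t. indicator {a<..b} t *\<^sub>R (indicator {a..b} t *\<^sub>R f t)) = (\<lambda>t. indicator {a<..b} t *\<^sub>R f t)"
    by (auto simp: fun_eq_iff split: split_indicator)
  ultimately show "integrable lborel (\<lambda>t. indicator {a<..b} t *\<^sub>R f t)" by simp
qed

lemma hbox_prod_integral:
  fixes g :: "'d::finite \<Rightarrow> real \<Rightarrow> complex"
  assumes cont: "\<And>i. continuous_on UNIV (g i)"
  shows "integrable (lebesgue_on (hbox a b)) (\<lambda>x::real^'d. \<Prod>i\<in>UNIV. g i (x $ i))"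
    and "integral\<^sup>L (lebesgue_on (hbox a b)) (\<lambda>x::real^'d. \<Prod>i\<in>UNIV. g i (x $ i))
        = (\<Prod>i\<in>UNIV. integral\<^sup>L lborel (\<lambda>t. indicator {a..b} t *\<^sub>R g i t))"
proof -
  have gm [measurable]: "g i \<in> borel_measurable borel" for i
    using cont by (intro borel_measurable_continuous_onI) 
  have meas: "(\<lambda>x::real^'d. \<Prod>i\<in>UNIV. g i (x $ i)) \<in> borel_measurable borel"
    by measurable
  have eq: "indicator (hbox a b) x *\<^sub>R (\<Prod>i\<in>UNIV. g i (x $ i))
      = (\<Prod>i\<in>UNIV. indicator {a<..b} (x $ i) *\<^sub>R g i (x $ i))" for x :: "real^'d"
    unfolding indicator_hbox by (simp add: scaleR_conv_of_real prod.distrib)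
  have int: "integrable lborel (\<lambda>t. indicator {a<..b} t *\<^sub>R g i t)" for i
    using integrable_Icc_continuous(2)[OF cont] .
  show "integrable (lebesgue_on (hbox a b)) (\<lambda>x::real^'d. \<Prod>i\<in>UNIV. g i (x $ i))"
    unfolding integrable_lebesgue_on_borel[OF hbox_borel meas] eq
    by (rule prod_integral_vec(1)[OF int])
  have "integral\<^sup>L (lebesgue_on (hbox a b)) (\<lambda>x::real^'d. \<Prod>i\<in>UNIV. g i (x $ i))
      = (\<Prod>i\<in>UNIV. integral\<^sup>L lborel (\<lambda>t. indicator {a<..b} t *\<^sub>R g i t))"
    unfolding integral_lebesgue_on_borel[OF hbox_borel meas] eq
    by (rule prod_integral_vec(2)[OF int])
  also have "\<dots> = (\<Prod>i\<in>UNIV. integral\<^sup>L lborel (\<lambda>t. indicator {a..b} t *\<^sub>R g i t))"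
    by (intro prod.cong refl integral_Ioc_Icc) simp
  finally show "integral\<^sup>L (lebesgue_on (hbox a b)) (\<lambda>x::real^'d. \<Prod>i\<in>UNIV. g i (x $ i))
        = (\<Prod>i\<in>UNIV. integral\<^sup>L lborel (\<lambda>t. indicator {a..b} t *\<^sub>R g i t))" .
qed

lemma integral_exp_1d:
  fixes m :: real
  assumes "m \<in> \<int>"
  shows "integral\<^sup>L lborel (\<lambda>t. indicator {-1/2..1/2} t *\<^sub>R exp (2 * pi * \<i> * complex_of_real (m * t)))
       = (if m = 0 then 1 else 0)"
proof (cases "m = 0")
  case True
  then show ?thesis by (simp add: scaleR_conv_of_real)
next
  case False
  define c where "c = 2 * pi * \<i> * complex_of_real m"
  have c: "c \<noteq> 0" using False by (simp add: c_def)
  have e: "exp (2 * pi * \<i> * complex_of_real (m * t)) = exp (c * complex_of_real t)" for t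
    by (simp add: c_def mult_ac)
  have "integral\<^sup>L lborel (\<lambda>t. indicator {-1/2..1/2} t *\<^sub>R exp (2 * pi * \<i> * complex_of_real (m * t)))
      = (LBINT t=ereal (-1/2)..ereal (1/2). exp (c * complex_of_real t))"
    unfolding e by (subst interval_integral_Icc[of "-1/2" "1/2"]) (simp_all add: set_lebesgue_integral_def)
  also have "\<dots> = exp (c * complex_of_real (1/2)) / c - exp (c * complex_of_real (-1/2)) / c"
  proof (rule interval_integral_FTC_finite)
    show "continuous_on {min (- 1 / 2) (1 / 2)..max (- 1 / 2) (1 / 2::real)} (\<lambda>t. exp (c * complex_of_real t))"
      by (intro continuous_intros)
    fix x :: real
    have "((\<lambda>z. exp (c * z) / c) has_field_derivative exp (c * complex_of_real x)) (at (complex_of_real x))"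
      using c by (auto intro!: derivative_eq_intros)
    then show "((\<lambda>t. exp (c * complex_of_real t) / c) has_vector_derivative exp (c * complex_of_real x))
        (at x within {min (- 1 / 2) (1 / 2)..max (- 1 / 2) (1 / 2)})"
      by (rule has_vector_derivative_real_field)
  qed
  also have "exp (c * complex_of_real (1/2)) = exp (c * complex_of_real (-1/2))"
  proof -
    have "exp (c * complex_of_real (1/2)) = exp (c * complex_of_real (-1/2)) * exp (2 * pi * \<i> * complex_of_real m)"
      by (simp add: c_def exp_add[symmetric] field_simps)
    also have "exp (2 * pi * \<i> * complex_of_real m) = 1" by (rule exp_2pi_int[OF assms])
    finally show ?thesis by simp
  qed
  finally show ?thesis using False by simp
qed

lemma fourier_mode_prod: "fourier_mode k x = (\<Prod>i\<in>UNIV. exp (2 * pi * \<i> * complex_of_real (k $ i * x $ i)))"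
  unfolding fourier_mode_def inner_vec_def by (simp add: of_real_sum sum_distrib_left exp_sum)

lemma integral_fourier_mode:
  fixes k :: "real ^ 'd"
  assumes "k \<in> int_lattice"
  shows "integrable (lebesgue_on cube) (fourier_mode k)"
    and "integral\<^sup>L (lebesgue_on cube) (fourier_mode k) = (if k = 0 then 1 else 0)"
proof -
  have cont: "continuous_on UNIV (\<lambda>t. exp (2 * pi * \<i> * complex_of_real (k $ i * t)))" for i
    by (intro continuous_intros)
  show "integrable (lebesgue_on cube) (fourier_mode k)"
    unfolding fourier_mode_prod[abs_def] cube_hbox by (rule hbox_prod_integral(1)[OF cont])
  have "integral\<^sup>L (lebesgue_on cube) (fourier_mode k)
      = (\<Prod>i\<in>UNIV. integral\<^sup>L lborel (\<lambda>t. indicator {-1/2..1/2} t *\<^sub>R exp (2 * pi * \<i> * complex_of_real (k $ i * t))))"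
    unfolding fourier_mode_prod[abs_def] cube_hbox by (rule hbox_prod_integral(2)[OF cont])
  also have "\<dots> = (\<Prod>i\<in>UNIV. if k $ i = 0 then 1 else 0)"
    using assms by (intro prod.cong refl integral_exp_1d) (auto simp: int_lattice_def)
  also have "\<dots> = (if k = 0 then 1 else 0)"
    by (auto simp: vec_eq_iff prod_zero_iff)
  finally show "integral\<^sup>L (lebesgue_on cube) (fourier_mode k) = (if k = 0 then 1 else 0)" .
qed


lemma bounded_cube: "bounded cube"
  by (rule bounded_subset[OF compact_imp_bounded[OF compact_ccube] cube_subset_ccube])

lemma cube_lmeasurable: "cube \<in> lmeasurable"
  by (intro bounded_set_imp_lmeasurable bounded_cube) (metis cube_borel sets_completionI_sets sets_lborel)

lemma finite_measure_cube: "finite_measure (lebesgue_on cube)"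
  by (rule finite_measure_lebesgue_on[OF cube_lmeasurable])

lemma cube_lebesgue [measurable]: "cube \<in> sets lebesgue"
  using cube_lmeasurable by (simp add: fmeasurable_def)

lemma measure_cube: "measure (lebesgue_on cube) (space (lebesgue_on cube)) = 1"
proof -
  have "integral\<^sup>L (lebesgue_on cube) (fourier_mode (0::real^'d)) = 1"
    using integral_fourier_mode(2)[OF zero_in_int_lattice] by simp
  then have "integral\<^sup>L (lebesgue_on cube) (\<lambda>x::real^'d. 1::complex) = 1"
    by (simp add: fun_eq_iff cong: Bochner_Integration.integral_cong)
  then show ?thesis by (simp add: scaleR_conv_of_real)
qed

lemma bounded_on_ccube:
  fixes f :: "real ^ 'd \<Rightarrow> 'b::real_normed_vector"
  assumes "continuous_on ccube f"
  obtains B where "B > 0" "\<And>x. x \<in> ccube \<Longrightarrow> norm (f x) \<le> B"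
proof -
  have "bounded (f ` ccube)"
    by (intro compact_imp_bounded compact_continuous_image assms compact_ccube)
  then show ?thesis using that by (auto simp: bounded_pos)
qed

lemma cont_integrable_cube:
  fixes f :: "real ^ 'd \<Rightarrow> complex"
  assumes "continuous_on ccube f"
  shows "integrable (lebesgue_on cube) f"
proof -
  obtain B where B: "\<And>x. x \<in> ccube \<Longrightarrow> norm (f x) \<le> B"
    using bounded_on_ccube[OF assms] by blast
  interpret finite_measure "lebesgue_on cube" by (rule finite_measure_cube)
  show ?thesis
  proof (rule integrable_const_bound[where B=B])
    show "AE x in lebesgue_on cube. norm (f x) \<le> B"
      using B cube_subset_ccube by (auto intro!: AE_I2)
    show "f \<in> borel_measurable (lebesgue_on cube)"
      by (rule continuous_imp_measurable_on_sets_lebesgue[OF continuous_on_subset[OF assms cube_subset_ccube]]) simp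
  qed
qed

lemma norm_integral_cube_le:
  fixes g :: "real ^ 'd \<Rightarrow> complex"
  assumes "integrable (lebesgue_on cube) g" "\<And>x. x \<in> cube \<Longrightarrow> norm (g x) \<le> e"
  shows "norm (integral\<^sup>L (lebesgue_on cube) g) \<le> e"
proof -
  interpret finite_measure "lebesgue_on cube" by (rule finite_measure_cube)
  have "norm (integral\<^sup>L (lebesgue_on cube) g) \<le> integral\<^sup>L (lebesgue_on cube) (\<lambda>x. norm (g x))"
    by (rule integral_norm_bound)
  also have "\<dots> \<le> integral\<^sup>L (lebesgue_on cube) (\<lambda>x::real^'d. e)"
  proof (rule Bochner_Integration.integral_mono)
    show "integrable (lebesgue_on cube) (\<lambda>x. norm (g x))" using assms(1) by (rule integrable_norm)
    show "integrable (lebesgue_on cube) (\<lambda>x::real^'d. e)" by simp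
    show "norm (g x) \<le> e" if "x \<in> space (lebesgue_on cube)" for x using assms(2) that by simp
  qed
  also have "\<dots> = e" using measure_cube[where 'a='d, simplified] by simp
  finally show ?thesis .
qed

lemma cont_reflect:
  fixes f :: "real ^ 'd \<Rightarrow> complex"
  assumes "continuous_on UNIV f"
  shows "continuous_on A (\<lambda>x. f (a - x))"
proof -
  have c: "continuous_on A (\<lambda>x. a - x)" by (rule continuous_on_op_minus)
  have "continuous_on A (f \<circ> (\<lambda>x. a - x))"
    by (rule continuous_on_compose[OF c continuous_on_subset[OF assms]]) auto
  then show ?thesis by (simp add: o_def)
qed

lemma trig_per_integral:
  assumes "t \<in> trig"
  shows "integral\<^sup>L (lebesgue_on cube) (\<lambda>x. t (a - x)) = integral\<^sup>L (lebesgue_on cube) t"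
  using assms
proof induction
  case (mode k)
  have "integral\<^sup>L (lebesgue_on cube) (\<lambda>x. fourier_mode k (a - x))
      = integral\<^sup>L (lebesgue_on cube) (\<lambda>x. fourier_mode k a * fourier_mode (- k) x)"
    by (simp add: fourier_mode_diff)
  also have "\<dots> = fourier_mode k a * integral\<^sup>L (lebesgue_on cube) (fourier_mode (- k))"
    by simp
  also have "\<dots> = integral\<^sup>L (lebesgue_on cube) (fourier_mode k)"
    using integral_fourier_mode(2)[OF mode] integral_fourier_mode(2)[OF int_lattice_uminus[OF mode]]
    by simp
  finally show ?case .
next
  case (add f g)
  have c: "continuous_on ccube f" "continuous_on ccube g"
    using add.hyps by (auto intro: trig_continuous)
  have c': "continuous_on ccube (\<lambda>x. f (a - x))" "continuous_on ccube (\<lambda>x. g (a - x))"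
    using cont_reflect[OF trig_continuous[OF add.hyps(1)]] cont_reflect[OF trig_continuous[OF add.hyps(2)]] by auto
  show ?case
    using add.IH cont_integrable_cube[OF c(1)] cont_integrable_cube[OF c(2)]
      cont_integrable_cube[OF c'(1)] cont_integrable_cube[OF c'(2)]
    by simp
next
  case (smult f c)
  then show ?case by simp
qed

lemma periodic_extend:
  fixes f :: "real ^ 'd \<Rightarrow> complex"
  assumes cont: "continuous_on UNIV f" and per: "\<And>x m. m \<in> int_lattice \<Longrightarrow> f (x + m) = f x"
  obtains F where "continuous_on (Emap ` ccube) F" "\<And>x. F (Emap x) = f x"
proof -
  have resp: "f x = f y" if "Emap x = Emap y" for x y
  proof -
    have "x - y \<in> int_lattice" by (rule Emap_eq_imp[OF that])
    from per[OF this, of y] show ?thesis by simp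
  qed
  obtain F where F: "continuous_on (Emap ` ccube) F" "\<And>x. x \<in> ccube \<Longrightarrow> F (Emap x) = f x"
    using quotient_extend[OF continuous_on_subset[OF cont subset_UNIV]] resp by blast
  have "F (Emap x) = f x" for x
  proof -
    obtain m where m: "m \<in> int_lattice" "x - m \<in> cube" using reduce_cube by blast
    have "F (Emap x) = F (Emap (x - m))"
      using Emap_periodic[OF int_lattice_uminus[OF m(1)], of x] by simp
    also have "\<dots> = f (x - m)" using F(2) m(2) cube_subset_ccube by blast
    also have "\<dots> = f x" using resp[of "x - m" x] Emap_periodic[OF int_lattice_uminus[OF m(1)], of x] by simp
    finally show ?thesis .
  qed
  then show ?thesis using that F(1) by blast
qed

lemma eq_if_close:
  fixes A B :: complex
  assumes "\<And>e. e > 0 \<Longrightarrow> norm (A - B) \<le> e"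
  shows "A = B"
proof (rule ccontr)
  assume "A \<noteq> B"
  then have "norm (A - B) > 0" by simp
  from assms[of "norm (A - B) / 2", OF half_gt_zero[OF this]] this show False by simp
qed

lemma per_integral:
  fixes f :: "real ^ 'd \<Rightarrow> complex"
  assumes cont: "continuous_on UNIV f" and per: "\<And>x m. m \<in> int_lattice \<Longrightarrow> f (x + m) = f x"
  shows "integral\<^sup>L (lebesgue_on cube) (\<lambda>x. f (a - x)) = integral\<^sup>L (lebesgue_on cube) f"
proof (rule eq_if_close)
  fix e :: real assume e: "e > 0"
  obtain F where F: "continuous_on (Emap ` ccube) F" "\<And>x. F (Emap x) = f x"
    using periodic_extend[OF cont per] by blast
  obtain t where t: "t \<in> trig" "\<And>x. norm (F (Emap x) - t x) < e / 2"
    using trig_approx[OF F(1), of "e/2"] e by auto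
  have tc: "continuous_on UNIV t" by (rule trig_continuous[OF t(1)])
  have fa: "continuous_on ccube (\<lambda>x. f (a - x))" "continuous_on ccube (\<lambda>x. t (a - x))"
    by (auto intro!: cont_reflect cont tc)
  have i1: "integrable (lebesgue_on cube) (\<lambda>x. f (a - x))" "integrable (lebesgue_on cube) (\<lambda>x. t (a - x))"
    using fa by (auto intro: cont_integrable_cube)
  have i2: "integrable (lebesgue_on cube) f" "integrable (lebesgue_on cube) t"
    using cont tc by (auto intro: cont_integrable_cube continuous_on_subset)
  have "norm (integral\<^sup>L (lebesgue_on cube) (\<lambda>x. f (a - x)) - integral\<^sup>L (lebesgue_on cube) (\<lambda>x. t (a - x))) \<le> e / 2"
    unfolding Bochner_Integration.integral_diff[OF i1, symmetric]
    by (rule norm_integral_cube_le) (use i1 t(2) F(2) in \<open>auto intro: less_imp_le\<close>)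
  moreover have "norm (integral\<^sup>L (lebesgue_on cube) t - integral\<^sup>L (lebesgue_on cube) f) \<le> e / 2"
    unfolding Bochner_Integration.integral_diff[OF i2(2) i2(1), symmetric]
    by (rule norm_integral_cube_le) (use i2 t(2) F(2) in \<open>auto intro: less_imp_le simp: norm_minus_commute\<close>)
  moreover note trig_per_integral[OF t(1), of a]
  ultimately show "norm (integral\<^sup>L (lebesgue_on cube) (\<lambda>x. f (a - x)) - integral\<^sup>L (lebesgue_on cube) f) \<le> e"
    using norm_triangle_ineq[of "integral\<^sup>L (lebesgue_on cube) (\<lambda>x. f (a - x)) - integral\<^sup>L (lebesgue_on cube) (\<lambda>x. t (a - x))"
        "integral\<^sup>L (lebesgue_on cube) t - integral\<^sup>L (lebesgue_on cube) f"]
    by simp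
qed


lemma Emap_boundary:
  assumes "x \<in> ccube" "y \<in> ccube" "Emap x = Emap y" "x \<noteq> y"
  shows "\<exists>i. \<bar>x $ i\<bar> = 1/2"
proof -
  have d: "x - y \<in> int_lattice" by (rule Emap_eq_imp) fact
  obtain i where ne: "x $ i \<noteq> y $ i" using assms(4) by (auto simp: vec_eq_iff)
  have "x $ i - y $ i \<in> \<int>" using d by (auto simp: int_lattice_def)
  then obtain n :: int where n: "x $ i - y $ i = of_int n" by (auto elim: Ints_cases)
  have bx: "-1/2 \<le> x $ i" "x $ i \<le> 1/2" and hy: "-1/2 \<le> y $ i" "y $ i \<le> 1/2"
    using assms(1,2) by (auto simp: mem_ccube)
  have "n \<noteq> 0" using ne n by auto
  moreover have "\<bar>real_of_int n\<bar> \<le> 1" using n bx hy by linarith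
  ultimately have "n = 1 \<or> n = -1" by linarith
  then have "\<bar>x $ i\<bar> = 1/2" using n bx hy by auto
  then show ?thesis by blast
qed

lemma integrable_mult_cont:
  fixes h g :: "real ^ 'd \<Rightarrow> complex"
  assumes h: "integrable (lebesgue_on cube) h" and g: "continuous_on UNIV g"
  shows "integrable (lebesgue_on cube) (\<lambda>x. h x * g x)"
proof -
  obtain B where B: "B > 0" "\<And>x. x \<in> ccube \<Longrightarrow> norm (g x) \<le> B"
    using bounded_on_ccube[OF continuous_on_subset[OF g subset_UNIV]] by blast
  have gm: "g \<in> borel_measurable (lebesgue_on cube)"
    by (rule continuous_imp_measurable_on_sets_lebesgue[OF continuous_on_subset[OF g subset_UNIV]]) simp
  show ?thesis
  proof (rule Bochner_Integration.integrable_bound[where f="\<lambda>x. complex_of_real B * h x"])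
    show "integrable (lebesgue_on cube) (\<lambda>x. complex_of_real B * h x)"
      using h by (rule integrable_mult_right)
    show "(\<lambda>x. h x * g x) \<in> borel_measurable (lebesgue_on cube)"
      using borel_measurable_integrable[OF h] gm by measurable
    show "AE x in lebesgue_on cube. norm (h x * g x) \<le> norm (complex_of_real B * h x)"
    proof (rule AE_I2)
      fix x :: "real ^ 'd" assume "x \<in> space (lebesgue_on cube)"
      then have "x \<in> ccube" using cube_subset_ccube by auto
      then have "norm (g x) \<le> B" by (rule B(2))
      then have "norm (h x) * norm (g x) \<le> norm (h x) * B" by (rule mult_left_mono) simp
      then show "norm (h x * g x) \<le> norm (complex_of_real B * h x)"
        using B(1) by (simp add: norm_mult abs_of_pos mult.commute)
    qed
  qed
qed

lemma trig_orth:
  fixes h :: "real ^ 'd \<Rightarrow> complex"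
  assumes h: "integrable (lebesgue_on cube) h"
    and orth: "\<forall>k\<in>int_lattice. integral\<^sup>L (lebesgue_on cube) (\<lambda>x. h x * cnj (fourier_mode k x)) = 0"
    and t: "t \<in> trig"
  shows "integral\<^sup>L (lebesgue_on cube) (\<lambda>x. h x * cnj (t x)) = 0"
  using t
proof induction
  case (mode k)
  then show ?case using orth by blast
next
  case (add f g)
  have "integrable (lebesgue_on cube) (\<lambda>x. h x * cnj (f x))" "integrable (lebesgue_on cube) (\<lambda>x. h x * cnj (g x))"
    using integrable_mult_cont[OF h continuous_on_cnj[OF trig_continuous[OF add.hyps(1)]]]
      integrable_mult_cont[OF h continuous_on_cnj[OF trig_continuous[OF add.hyps(2)]]] by auto
  then show ?case using add.IH by (simp add: distrib_left)
next
  case (smult f c)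
  have "(\<lambda>x. h x * cnj (c * f x)) = (\<lambda>x. cnj c * (h x * cnj (f x)))"
    by (simp add: fun_eq_iff mult_ac)
  then show ?case using smult.IH by simp
qed

lemma orth_cont_zero:
  fixes h g :: "real ^ 'd \<Rightarrow> complex"
  assumes h: "integrable (lebesgue_on cube) h"
    and orth: "\<forall>k\<in>int_lattice. integral\<^sup>L (lebesgue_on cube) (\<lambda>x. h x * cnj (fourier_mode k x)) = 0"
    and gc: "continuous_on UNIV g"
    and gb: "\<And>x. x \<in> ccube \<Longrightarrow> (\<exists>i. \<bar>x $ i\<bar> = 1/2) \<Longrightarrow> g x = 0"
  shows "integral\<^sup>L (lebesgue_on cube) (\<lambda>x. h x * g x) = 0"
proof -
  have resp: "g x = g y" if "x \<in> ccube" "y \<in> ccube" "Emap x = Emap y" for x y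
  proof (cases "x = y")
    case False
    have "\<exists>i. \<bar>x $ i\<bar> = 1/2" by (rule Emap_boundary) (use that False in auto)
    moreover have "\<exists>i. \<bar>y $ i\<bar> = 1/2" by (rule Emap_boundary[of y x]) (use that False in auto)
    ultimately show ?thesis using gb that by auto
  qed simp
  obtain F where F: "continuous_on (Emap ` ccube) F" "\<And>x. x \<in> ccube \<Longrightarrow> F (Emap x) = g x"
    using quotient_extend[OF continuous_on_subset[OF gc subset_UNIV] resp] by blast
  define H where "H = integral\<^sup>L (lebesgue_on cube) (\<lambda>x. norm (h x))"
  have H: "H \<ge> 0" unfolding H_def by (rule Bochner_Integration.integral_nonneg) auto
  show ?thesis
  proof (rule eq_if_close)
    fix e :: real assume e: "e > 0"
    define e' where "e' = e / (H + 1)"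
    have e': "e' > 0" using e H by (simp add: e'_def)
    have cF: "continuous_on (Emap ` ccube) (\<lambda>s. cnj (F s))" using F(1) by (intro continuous_intros)
    obtain t where t: "t \<in> trig" "\<And>x. norm (cnj (F (Emap x)) - t x) < e'"
      using trig_approx[OF cF e'] by blast
    have tc: "continuous_on UNIV (\<lambda>x. cnj (t x))" by (intro continuous_intros trig_continuous[OF t(1)])
    have i1: "integrable (lebesgue_on cube) (\<lambda>x. h x * g x)" by (rule integrable_mult_cont[OF h gc])
    have i2: "integrable (lebesgue_on cube) (\<lambda>x. h x * cnj (t x))" by (rule integrable_mult_cont[OF h tc])
    have "integral\<^sup>L (lebesgue_on cube) (\<lambda>x. h x * g x)
        = integral\<^sup>L (lebesgue_on cube) (\<lambda>x. h x * g x - h x * cnj (t x))"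
      using trig_orth[OF h orth t(1)] Bochner_Integration.integral_diff[OF i1 i2] by simp
    also have "norm \<dots> \<le> integral\<^sup>L (lebesgue_on cube) (\<lambda>x. norm (h x * g x - h x * cnj (t x)))"
      by (rule integral_norm_bound)
    also have "\<dots> \<le> integral\<^sup>L (lebesgue_on cube) (\<lambda>x. e' * norm (h x))"
    proof (rule Bochner_Integration.integral_mono)
      show "integrable (lebesgue_on cube) (\<lambda>x. norm (h x * g x - h x * cnj (t x)))"
        using i1 i2 by auto
      show "integrable (lebesgue_on cube) (\<lambda>x. e' * norm (h x))"
        using h by auto
      fix x :: "real ^ 'd" assume "x \<in> space (lebesgue_on cube)"
      then have x: "x \<in> ccube" using cube_subset_ccube by auto
      have "norm (g x - cnj (t x)) = norm (cnj (F (Emap x)) - t x)"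
        using F(2)[OF x] by (metis complex_cnj_cnj complex_cnj_diff complex_mod_cnj)
      also have "\<dots> \<le> e'" using t(2)[of x] by simp
      finally have "norm (g x - cnj (t x)) \<le> e'" .
      then have "norm (h x) * norm (g x - cnj (t x)) \<le> norm (h x) * e'" by (rule mult_left_mono) simp
      moreover have "h x * g x - h x * cnj (t x) = h x * (g x - cnj (t x))" by (simp add: right_diff_distrib)
      ultimately show "norm (h x * g x - h x * cnj (t x)) \<le> e' * norm (h x)"
        by (simp add: norm_mult mult.commute)
    qed
    also have "\<dots> = e' * H" unfolding H_def by simp
    also have "\<dots> \<le> e"
    proof -
      have "e' * H \<le> e' * (H + 1)" using e' by simp
      also have "\<dots> = e" using H by (simp add: e'_def)
      finally show ?thesis .
    qed
    finally show "norm (integral\<^sup>L (lebesgue_on cube) (\<lambda>x. h x * g x) - 0) \<le> e" by simp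
  qed
qed


definition clampc :: "complex \<Rightarrow> complex" where
  "clampc z = z / complex_of_real (max 1 (norm z))"

lemma continuous_clampc: "continuous_on A clampc"
  unfolding clampc_def by (intro continuous_intros) auto

lemma norm_clampc: "norm (clampc z) \<le> 1"
  unfolding clampc_def by (auto simp: norm_divide field_simps)

lemma clampc_id: "norm z \<le> 1 \<Longrightarrow> clampc z = z"
  unfolding clampc_def by (simp add: max_def)

definition psi :: "nat \<Rightarrow> real \<Rightarrow> real" where
  "psi n t = min 1 (max 0 ((real n + 1) * (1/2 - \<bar>t\<bar>)))"

lemma continuous_psi: "continuous_on A (psi n)"
  unfolding psi_def by (intro continuous_intros)

lemma psi_bounds: "0 \<le> psi n t" "psi n t \<le> 1"
  unfolding psi_def by auto

lemma psi_half: "\<bar>t\<bar> = 1/2 \<Longrightarrow> psi n t = 0"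
proof -
  assume "\<bar>t\<bar> = 1/2"
  then have "1/2 - \<bar>t\<bar> = 0" by simp
  then show ?thesis unfolding psi_def by (simp only:)
qed

lemma psi_lim:
  assumes "\<bar>t\<bar> < 1/2"
  shows "(\<lambda>n. psi n t) \<longlonglongrightarrow> 1"
proof (rule tendsto_eventually)
  have d: "1/2 - \<bar>t\<bar> > 0" using assms by simp
  obtain N :: nat where N: "real N > 1 / (1/2 - \<bar>t\<bar>)" using reals_Archimedean2 by blast
  show "\<forall>\<^sub>F n in sequentially. psi n t = 1"
  proof (rule eventually_sequentiallyI[of N])
    fix n assume "N \<le> n"
    then have "real n + 1 > 1 / (1/2 - \<bar>t\<bar>)" using N by linarith
    then have "(real n + 1) * (1/2 - \<bar>t\<bar>) > 1" using d by (simp add: field_simps)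
    then have "max 0 ((real n + 1) * (1/2 - \<bar>t\<bar>)) = (real n + 1) * (1/2 - \<bar>t\<bar>)" by (intro max_absorb2 less_imp_le[OF less_trans[OF zero_less_one]])
    with \<open>(real n + 1) * (1/2 - \<bar>t\<bar>) > 1\<close> show "psi n t = 1" unfolding psi_def by simp
  qed
qed

definition chi :: "nat \<Rightarrow> real ^ 'd \<Rightarrow> real" where
  "chi n x = (\<Prod>i\<in>UNIV. psi n (x $ i))"

lemma continuous_chi: "continuous_on A (chi n)"
  unfolding chi_def
  by (intro continuous_on_prod continuous_on_compose2[OF continuous_psi[of UNIV]] continuous_on_component) auto

lemma chi_bounds: "0 \<le> chi n x" "chi n x \<le> 1"
  unfolding chi_def using psi_bounds by (auto intro: prod_nonneg prod_le_1)

lemma chi_boundary: "\<bar>x $ i\<bar> = 1/2 \<Longrightarrow> chi n x = 0"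
  unfolding chi_def using psi_half by (intro prod_zero) auto

lemma chi_lim:
  fixes x :: "real ^ 'd"
  assumes "\<And>i. \<bar>x $ i\<bar> < 1/2"
  shows "(\<lambda>n. chi n x) \<longlonglongrightarrow> 1"
proof -
  have "(\<lambda>n. \<Prod>i\<in>UNIV. psi n (x $ i)) \<longlonglongrightarrow> (\<Prod>i\<in>(UNIV::'d set). (1::real))"
    by (rule tendsto_prod) (rule psi_lim[OF assms])
  then show ?thesis unfolding chi_def by simp
qed

lemma boundary_null: "{x :: real ^ 'd. \<exists>i. x $ i = 1/2} \<in> null_sets lebesgue"
proof -
  have "{x :: real ^ 'd. \<exists>i. x $ i = 1/2} = \<Union>((\<lambda>i. {x. x \<bullet> axis i 1 = 1/2}) ` UNIV)"
    by (auto simp: cart_eq_inner_axis[symmetric])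
  also have "negligible \<dots>"
  proof -
    have h: "negligible {x::real^'d. x \<bullet> axis i 1 = 1/2}" for i
      by (rule negligible_standard_hyperplane) (simp add: axis_in_Basis_iff)
    show ?thesis
      apply (rule negligible_Union)
       apply simp
      apply (erule imageE)
      apply (simp only: h)
      done
  qed
  finally show ?thesis by (simp add: negligible_iff_null_sets)
qed

theorem fourier_complete:
  fixes h :: "real ^ 'd \<Rightarrow> complex"
  assumes hm: "h \<in> borel_measurable (lebesgue_on cube)"
    and h2: "integrable (lebesgue_on cube) (\<lambda>x. (norm (h x))\<^sup>2)"
    and orth: "\<forall>k\<in>int_lattice. integral\<^sup>L (lebesgue_on cube) (\<lambda>x. h x * cnj (fourier_mode k x)) = 0"
  shows "AE x in lebesgue_on cube. h x = 0"
proof -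
  have hint: "integrable (lebesgue_on cube) h"
  proof (rule Bochner_Integration.integrable_bound[where f="\<lambda>x. 1 + (norm (h x))\<^sup>2"])
    interpret finite_measure "lebesgue_on (cube :: (real^'d) set)" by (rule finite_measure_cube)
    show "integrable (lebesgue_on cube) (\<lambda>x. 1 + (norm (h x))\<^sup>2)"
      using h2 by simp
    show "h \<in> borel_measurable (lebesgue_on cube)" by (rule hm)
    show "AE x in lebesgue_on cube. norm (h x) \<le> norm (1 + (norm (h x))\<^sup>2)"
    proof (rule AE_I2)
      fix x
      have "norm (h x) \<le> 1 + (norm (h x))\<^sup>2"
      proof (cases "norm (h x) \<le> 1")
        case True
        then show ?thesis by (simp add: add_increasing2)
      next
        case False
        then have "norm (h x) * 1 \<le> norm (h x) * norm (h x)" by (intro mult_left_mono) auto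
        then show ?thesis by (simp add: power2_eq_square)
      qed
      then show "norm (h x) \<le> norm (1 + (norm (h x))\<^sup>2)" by simp
    qed
  qed
  define u where "u x = cnj (h x) / complex_of_real (norm (h x))" for x
  have cm [measurable]: "cnj \<in> borel_measurable borel"
    by (rule borel_measurable_continuous_onI) (intro continuous_on_cnj continuous_on_id)
  have um: "u \<in> borel_measurable (lebesgue_on cube)" unfolding u_def using hm by measurable
  have unorm: "norm (u x) \<le> 1" for x
    unfolding u_def by (cases "h x = 0") (auto simp: norm_divide)
  have hu: "h x * u x = complex_of_real (norm (h x))" for x
  proof (cases "h x = 0")
    case False
    have "h x * cnj (h x) = complex_of_real ((norm (h x))\<^sup>2)" using complex_norm_square[of "h x"] by simp
    then show ?thesis using False unfolding u_def by (simp add: power2_eq_square field_simps)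
  qed (simp add: u_def)
  have "u measurable_on cube"
    using um by (simp add: measurable_on_iff_borel_measurable)
  then obtain N g where N: "negligible N" and gc: "\<And>n. continuous_on UNIV (g n)"
    and glim: "\<And>x. x \<notin> N \<Longrightarrow> (\<lambda>n. g n x) \<longlonglongrightarrow> (if x \<in> cube then u x else 0)"
    unfolding measurable_on_def by blast
  define G where "G n x = clampc (g n x) * complex_of_real (chi n x)" for n x
  have Gc: "continuous_on UNIV (G n)" for n
    unfolding G_def
    by (intro continuous_intros continuous_on_compose2[OF continuous_clampc[of UNIV] gc] continuous_chi) auto
  have Gnorm: "norm (G n x) \<le> 1" for n x
  proof -
    have "norm (G n x) = norm (clampc (g n x)) * chi n x"
      unfolding G_def using chi_bounds[of n x] by (simp add: norm_mult)
    also have "\<dots> \<le> 1 * 1"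
      using norm_clampc chi_bounds by (intro mult_mono) auto
    finally show ?thesis by simp
  qed
  have G0: "\<forall>n. integral\<^sup>L (lebesgue_on cube) (\<lambda>x. h x * G n x) = 0"
  proof
    fix n
    show "integral\<^sup>L (lebesgue_on cube) (\<lambda>x. h x * G n x) = 0"
    proof (rule orth_cont_zero[OF hint orth Gc])
      fix x :: "real ^ 'd" assume "\<exists>i. \<bar>x $ i\<bar> = 1/2"
      then obtain i where "\<bar>x $ i\<bar> = 1/2" by blast
      then show "G n x = 0" unfolding G_def by (simp add: chi_boundary)
    qed
  qed
  have Glim: "(\<lambda>n. G n x) \<longlonglongrightarrow> u x" if x: "x \<in> cube" "x \<notin> N" "\<forall>i. x $ i \<noteq> 1/2" for x
  proof -
    have inner: "\<bar>x $ i\<bar> < 1/2" for i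
    proof -
      have "-1/2 < x $ i" "x $ i \<le> 1/2" using x(1) by (auto simp: cube_def)
      moreover have "x $ i \<noteq> 1/2" using x(3) by blast
      ultimately show ?thesis by linarith
    qed
    have "(\<lambda>n. g n x) \<longlonglongrightarrow> u x" using glim[OF x(2)] x(1) by simp
    then have "(\<lambda>n. clampc (g n x)) \<longlonglongrightarrow> clampc (u x)"
      by (rule continuous_on_tendsto_compose[OF continuous_clampc[of UNIV]]) auto
    then have "(\<lambda>n. clampc (g n x)) \<longlonglongrightarrow> u x" using clampc_id[OF unorm] by simp
    moreover have "(\<lambda>n. complex_of_real (chi n x)) \<longlonglongrightarrow> complex_of_real 1"
      by (intro tendsto_of_real chi_lim inner)
    ultimately have "(\<lambda>n. clampc (g n x) * complex_of_real (chi n x)) \<longlonglongrightarrow> u x * complex_of_real 1"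
      by (rule tendsto_mult)
    then show ?thesis unfolding G_def by simp
  qed
  have AElim: "AE x in lebesgue_on cube. (\<lambda>n. h x * G n x) \<longlonglongrightarrow> h x * u x"
  proof -
    have Z: "N \<union> {x :: real ^ 'd. \<exists>i. x $ i = 1/2} \<in> null_sets lebesgue"
      using N boundary_null by (auto simp: negligible_iff_null_sets)
    have "AE x in lebesgue. x \<in> cube \<longrightarrow> (\<lambda>n. h x * G n x) \<longlonglongrightarrow> h x * u x"
    proof (rule AE_I'[OF Z])
      show "{x \<in> space lebesgue. \<not> (x \<in> cube \<longrightarrow> (\<lambda>n. h x * G n x) \<longlonglongrightarrow> h x * u x)}
          \<subseteq> N \<union> {x. \<exists>i. x $ i = 1/2}"
        using Glim tendsto_mult_left by blast
    qed
    then show ?thesis by (subst AE_restrict_space_iff) auto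
  qed
  have "(\<lambda>n. integral\<^sup>L (lebesgue_on cube) (\<lambda>x. h x * G n x)) \<longlonglongrightarrow> integral\<^sup>L (lebesgue_on cube) (\<lambda>x. h x * u x)"
  proof (rule integral_dominated_convergence[where w="\<lambda>x. norm (h x)"])
    show "(\<lambda>x. h x * u x) \<in> borel_measurable (lebesgue_on cube)" using hm um by measurable
    show "(\<lambda>x. h x * G n x) \<in> borel_measurable (lebesgue_on cube)" for n
      using hm continuous_imp_measurable_on_sets_lebesgue[OF continuous_on_subset[OF Gc subset_UNIV], of cube n]
      by measurable
    show "integrable (lebesgue_on cube) (\<lambda>x. norm (h x))" using hint by auto
    show "AE x in lebesgue_on cube. (\<lambda>n. h x * G n x) \<longlonglongrightarrow> h x * u x" by (rule AElim)
    show "AE x in lebesgue_on cube. norm (h x * G n x) \<le> norm (h x)" for n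
    proof (rule AE_I2)
      fix x
      have "norm (h x) * norm (G n x) \<le> norm (h x) * 1" by (rule mult_left_mono[OF Gnorm]) simp
      then show "norm (h x * G n x) \<le> norm (h x)" by (simp add: norm_mult)
    qed
  qed
  then have "integral\<^sup>L (lebesgue_on cube) (\<lambda>x. h x * u x) = 0"
    using G0 LIMSEQ_unique[OF _ tendsto_const] by simp
  then have "complex_of_real (integral\<^sup>L (lebesgue_on cube) (\<lambda>x. norm (h x))) = 0"
    unfolding hu by simp
  then have "integral\<^sup>L (lebesgue_on cube) (\<lambda>x. norm (h x)) = 0" by simp
  then have "AE x in lebesgue_on cube. norm (h x) = 0"
    using integral_nonneg_eq_0_iff_AE[of "lebesgue_on cube" "\<lambda>x. norm (h x)"] hint by auto
  then show ?thesis by simp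
qed


definition rho :: "real ^ 'd \<Rightarrow> real" where
  "rho w = (INF m\<in>int_lattice. norm (w + m))"

lemma int_lattice_nonempty: "int_lattice \<noteq> {}"
  using zero_in_int_lattice by blast

lemma rho_bdd: "bdd_below ((\<lambda>m. norm (w + m)) ` int_lattice)"
  by (rule bdd_belowI[of _ 0]) auto

lemma rho_le: "m \<in> int_lattice \<Longrightarrow> rho w \<le> norm (w + m)"
  unfolding rho_def by (rule cINF_lower[OF rho_bdd])

lemma rho_ge: "(\<And>m. m \<in> int_lattice \<Longrightarrow> c \<le> norm (w + m)) \<Longrightarrow> c \<le> rho w"
  unfolding rho_def by (rule cINF_greatest[OF int_lattice_nonempty])

lemma rho_nonneg: "0 \<le> rho w"
  by (rule rho_ge) auto

lemma rho_lip:
  fixes w w' :: "real ^ 'd"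
  shows "rho w \<le> rho w' + norm (w - w')"
proof -
  have "rho w - norm (w - w') \<le> rho w'"
  proof (rule rho_ge)
    fix m :: "real^'d" assume m: "m \<in> int_lattice"
    have "rho w \<le> norm (w + m)" by (rule rho_le[OF m])
    also have "\<dots> \<le> norm (w' + m) + norm (w - w')"
      using norm_triangle_ineq[of "w' + m" "w - w'"] by (simp add: algebra_simps)
    finally show "rho w - norm (w - w') \<le> norm (w' + m)" by simp
  qed
  then show ?thesis by simp
qed

lemma continuous_rho: "continuous_on A (rho :: real ^ 'd \<Rightarrow> real)"
  unfolding continuous_on_iff
proof (intro ballI allI impI)
  fix x :: "real^'d" and e :: real assume "e > 0"
  show "\<exists>d>0. \<forall>x'\<in>A. dist x' x < d \<longrightarrow> dist (rho x') (rho x) < e"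
  proof (intro exI[of _ e] conjI ballI impI)
    fix x' assume "dist x' x < e"
    moreover have "dist (rho x') (rho x) \<le> dist x' x"
      using rho_lip[of x' x] rho_lip[of x x'] by (simp add: dist_real_def dist_norm norm_minus_commute)
    ultimately show "dist (rho x') (rho x) < e" by simp
  qed (fact \<open>e > 0\<close>)
qed

lemma rho_periodic:
  fixes w m :: "real ^ 'd"
  shows "m \<in> int_lattice \<Longrightarrow> rho (w + m) = rho w"
proof -
  assume m: "m \<in> int_lattice"
  have "rho (w + m) \<le> rho w"
  proof (rule rho_ge)
    fix k :: "real^'d" assume "k \<in> int_lattice"
    then have "k - m \<in> int_lattice" using m by (rule int_lattice_diff)
    then have "rho (w + m) \<le> norm (w + m + (k - m))" by (rule rho_le)
    then show "rho (w + m) \<le> norm (w + k)" by simp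
  qed
  moreover have "rho w \<le> rho (w + m)"
  proof (rule rho_ge)
    fix k :: "real^'d" assume "k \<in> int_lattice"
    then have "m + k \<in> int_lattice" using m by (intro int_lattice_add)
    then have "rho w \<le> norm (w + (m + k))" by (rule rho_le)
    then show "rho w \<le> norm (w + m + k)" by (simp add: add.assoc)
  qed
  ultimately show ?thesis by simp
qed

lemma rho_ccube:
  fixes w :: "real ^ 'd"
  assumes "w \<in> ccube"
  shows "rho w = norm w"
proof (rule antisym)
  show "rho w \<le> norm w" using rho_le[OF zero_in_int_lattice, of w] by simp
  show "norm w \<le> rho w"
  proof (rule rho_ge)
    fix m :: "real^'d" assume m: "m \<in> int_lattice"
    have "w $ i * w $ i \<le> (w + m) $ i * (w + m) $ i" for i
    proof -
      have "-1/2 \<le> w $ i \<and> w $ i \<le> 1/2" using assms unfolding mem_ccube by blast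
      then have wi: "\<bar>w $ i\<bar> \<le> 1/2" by linarith
      obtain n :: int where n: "m $ i = of_int n" using m by (auto simp: int_lattice_def elim: Ints_cases)
      have "\<bar>w $ i\<bar> \<le> \<bar>w $ i + m $ i\<bar>"
      proof (cases "n = 0")
        case False
        then have "\<bar>real_of_int n\<bar> \<ge> 1" by linarith
        then show ?thesis using wi n by linarith
      qed (simp add: n)
      then show ?thesis by (simp add: abs_le_square_iff power2_eq_square)
    qed
    then have "w \<bullet> w \<le> (w + m) \<bullet> (w + m)"
      unfolding inner_vec_def by (intro sum_mono) simp
    then show "norm w \<le> norm (w + m)" by (simp add: norm_le)
  qed
qed

lemma torus_dist_rho: "torus_dist x x' = rho (x' - x)"
  unfolding torus_dist_def rho_def ..


definition Kern :: "real \<Rightarrow> real ^ 'd \<Rightarrow> real" where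
  "Kern \<epsilon> w = exp (- (rho w)\<^sup>2 / \<epsilon>) / Zeps \<epsilon> TYPE('d)"

lemma teps_Kern: "teps \<epsilon> \<theta> x y = Kern \<epsilon> ((y - \<theta>) - x)"
  unfolding teps_def Kern_def torus_dist_rho by (simp add: algebra_simps)

lemma continuous_Kern: "continuous_on A (Kern \<epsilon>)"
  unfolding Kern_def divide_inverse by (intro continuous_intros continuous_on_compose2[OF continuous_rho[of UNIV]]) auto

lemma Kern_periodic: "m \<in> int_lattice \<Longrightarrow> Kern \<epsilon> (w + m) = Kern \<epsilon> w"
  unfolding Kern_def by (simp add: rho_periodic)

theorem eigen_relation:
  fixes \<theta> y :: "real ^ 'd"
  assumes k: "k \<in> int_lattice"
  shows "Teps \<epsilon> \<theta> (fourier_mode k) y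
      = (fourier_mode (-k) \<theta> * integral\<^sup>L (lebesgue_on cube) (\<lambda>w. fourier_mode (-k) w * complex_of_real (Kern \<epsilon> w)))
        * fourier_mode k y"
proof -
  define a where "a = y - \<theta>"
  define f where "f w = fourier_mode k (a - w) * complex_of_real (Kern \<epsilon> w)" for w
  have fc: "continuous_on UNIV f"
    unfolding f_def
    by (intro continuous_intros continuous_on_compose2[OF continuous_Kern[of UNIV]]
        cont_reflect[OF continuous_fourier_mode]) auto
  have fp: "f (w + m) = f w" if m: "m \<in> int_lattice" for w m
  proof -
    have "fourier_mode k (a - (w + m)) = fourier_mode k ((a - w) + (- m))" by (simp add: algebra_simps)
    also have "\<dots> = fourier_mode k (a - w)" by (rule fourier_mode_periodic[OF k int_lattice_uminus[OF m]])
    finally show ?thesis unfolding f_def using Kern_periodic[OF m] by simp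
  qed
  have "Teps \<epsilon> \<theta> (fourier_mode k) y = integral\<^sup>L (lebesgue_on cube) (\<lambda>x. f (a - x))"
    unfolding Teps_def f_def teps_Kern a_def by simp
  also have "\<dots> = integral\<^sup>L (lebesgue_on cube) f"
    by (rule per_integral[OF fc fp])
  also have "\<dots> = integral\<^sup>L (lebesgue_on cube) (\<lambda>w. fourier_mode k a * (fourier_mode (-k) w * complex_of_real (Kern \<epsilon> w)))"
    unfolding f_def fourier_mode_diff by (simp add: mult.assoc)
  also have "\<dots> = fourier_mode k a * integral\<^sup>L (lebesgue_on cube) (\<lambda>w. fourier_mode (-k) w * complex_of_real (Kern \<epsilon> w))"
    by simp
  also have "fourier_mode k a = fourier_mode k y * fourier_mode (-k) \<theta>"
    unfolding a_def fourier_mode_diff ..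
  finally show ?thesis by (simp add: mult_ac)
qed


lemma gauss_real:
  fixes c :: real assumes c: "c > 0"
  shows "integrable lborel (\<lambda>t. exp (- t\<^sup>2 / c))"
    and "integral\<^sup>L lborel (\<lambda>t. exp (- t\<^sup>2 / c)) = sqrt (pi * c)"
proof -
  have "integrable lborel (\<lambda>t. exp (\<i> * complex_of_real (0 * t)) * complex_of_real (exp (- t\<^sup>2 / c)))"
    by (rule gauss_char(1)[OF c])
  then have i: "integrable lborel (\<lambda>t. complex_of_real (exp (- t\<^sup>2 / c)))" by simp
  then show "integrable lborel (\<lambda>t. exp (- t\<^sup>2 / c))" by (simp add: complex_of_real_integrable_eq)
  have "(LINT t|lborel. exp (\<i> * complex_of_real (0 * t)) * complex_of_real (exp (- t\<^sup>2 / c)))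
         = complex_of_real (sqrt (pi * c) * exp (- 0\<^sup>2 * c / 4))"
    by (rule gauss_char(2)[OF c])
  then show "integral\<^sup>L lborel (\<lambda>t. exp (- t\<^sup>2 / c)) = sqrt (pi * c)" by simp
qed

lemma one_d_bound:
  fixes m \<epsilon> :: real
  assumes eps: "\<epsilon> > 0"
  assumes g_def: "g = (\<lambda>t. exp (2 * pi * \<i> * complex_of_real (m * t)) * complex_of_real (exp (- t\<^sup>2 / \<epsilon>)))"
    and N_def: "N = integral\<^sup>L lborel (\<lambda>t. indicator {-1/2..1/2} t *\<^sub>R g t)"
    and Z1_def: "Z1 = integral\<^sup>L lborel (\<lambda>t. indicator {-1/2..1/2} t * exp (- t\<^sup>2 / \<epsilon>))"
    and G_def: "G = sqrt (pi * \<epsilon>)"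
    and \<eta>_def: "\<eta> = exp (- 1 / (8 * \<epsilon>))"
  shows "norm N \<le> Z1"
    and "norm (N - complex_of_real (Z1 * exp (- (pi\<^sup>2) * \<epsilon> * m\<^sup>2))) \<le> 2 * sqrt 2 * \<eta> * G"
    and "Z1 \<ge> G - sqrt 2 * \<eta> * G"
proof -
  define ind where "ind t = (indicator {-1/2..1/2::real} t :: real)" for t :: real
  define e where "e = exp (- (pi\<^sup>2) * \<epsilon> * m\<^sup>2)"
  have e: "0 \<le> e" "e \<le> 1" unfolding e_def using eps by auto
  have ig: "integrable lborel g"
    using gauss_char(1)[OF eps, of "2 * pi * m"] unfolding g_def by (simp add: mult_ac)
  have fullg: "integral\<^sup>L lborel g = complex_of_real (G * e)"
  proof -
    have "integral\<^sup>L lborel g = complex_of_real (sqrt (pi * \<epsilon>) * exp (- (2 * pi * m)\<^sup>2 * \<epsilon> / 4))"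
      using gauss_char(2)[OF eps, of "2 * pi * m"] unfolding g_def by (simp add: mult_ac)
    also have "- (2 * pi * m)\<^sup>2 * \<epsilon> / 4 = - (pi\<^sup>2) * \<epsilon> * m\<^sup>2" by (simp add: power_mult_distrib)
    finally show ?thesis unfolding G_def e_def .
  qed
  have ie: "integrable lborel (\<lambda>t. exp (- t\<^sup>2 / \<epsilon>))" by (rule gauss_real(1)[OF eps])
  have fulle: "integral\<^sup>L lborel (\<lambda>t. exp (- t\<^sup>2 / \<epsilon>)) = G" unfolding G_def by (rule gauss_real(2)[OF eps])
  have normg: "norm (g t) = exp (- t\<^sup>2 / \<epsilon>)" for t
    unfolding g_def by (simp add: norm_mult norm_exp_i_times mult.commute[of _ \<i>] mult.assoc)
  have iNg: "integrable lborel (\<lambda>t. ind t *\<^sub>R g t)"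
    unfolding ind_def by (rule integrable_mult_indicator) (auto intro: ig)
  have iTg: "integrable lborel (\<lambda>t. (1 - ind t) *\<^sub>R g t)"
    using ig iNg by (simp add: scaleR_diff_left)
  have iNe: "integrable lborel (\<lambda>t. ind t * exp (- t\<^sup>2 / \<epsilon>))"
    unfolding ind_def using integrable_mult_indicator[OF _ ie, of "{-1/2..1/2}"] by simp
  have iTe: "integrable lborel (\<lambda>t. (1 - ind t) * exp (- t\<^sup>2 / \<epsilon>))"
    using ie iNe by (simp add: left_diff_distrib)
  define T where "T = integral\<^sup>L lborel (\<lambda>t. (1 - ind t) *\<^sub>R g t)"
  define B where "B = integral\<^sup>L lborel (\<lambda>t. (1 - ind t) * exp (- t\<^sup>2 / \<epsilon>))"
  have NT: "N + T = complex_of_real (G * e)"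
  proof -
    have "N + T = integral\<^sup>L lborel (\<lambda>t. ind t *\<^sub>R g t + (1 - ind t) *\<^sub>R g t)"
      unfolding N_def T_def ind_def[symmetric] by (rule Bochner_Integration.integral_add[OF iNg iTg, symmetric])
    also have "\<dots> = integral\<^sup>L lborel g" by (simp add: scaleR_diff_left)
    finally show ?thesis using fullg by simp
  qed
  have ZB: "Z1 + B = G"
  proof -
    have "Z1 + B = integral\<^sup>L lborel (\<lambda>t. ind t * exp (- t\<^sup>2 / \<epsilon>) + (1 - ind t) * exp (- t\<^sup>2 / \<epsilon>))"
      unfolding Z1_def B_def ind_def[symmetric] by (rule Bochner_Integration.integral_add[OF iNe iTe, symmetric])
    also have "\<dots> = integral\<^sup>L lborel (\<lambda>t. exp (- t\<^sup>2 / \<epsilon>))" by (simp add: algebra_simps)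
    finally show ?thesis using fulle by simp
  qed
  have ind01: "0 \<le> ind t" "ind t \<le> 1" for t unfolding ind_def by (auto split: split_indicator)
  have TB: "norm T \<le> B"
  proof -
    have "norm T \<le> integral\<^sup>L lborel (\<lambda>t. norm ((1 - ind t) *\<^sub>R g t))"
      unfolding T_def by (rule integral_norm_bound)
    also have "\<dots> = B" unfolding B_def using ind01 by (simp add: normg)
    finally show ?thesis .
  qed
  have NZ: "norm N \<le> Z1"
  proof -
    have "norm N \<le> integral\<^sup>L lborel (\<lambda>t. norm (ind t *\<^sub>R g t))"
      unfolding N_def ind_def[symmetric] by (rule integral_norm_bound)
    also have "\<dots> = Z1" unfolding Z1_def ind_def[symmetric] using ind01 by (simp add: normg)
    finally show ?thesis .
  qed
  then show "norm N \<le> Z1" .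
  have Bbound: "B \<le> sqrt 2 * \<eta> * G"
  proof -
    have i2: "integrable lborel (\<lambda>t. \<eta> * exp (- t\<^sup>2 / (2 * \<epsilon>)))"
      using gauss_real(1)[of "2 * \<epsilon>"] eps by simp
    have "B \<le> integral\<^sup>L lborel (\<lambda>t. \<eta> * exp (- t\<^sup>2 / (2 * \<epsilon>)))"
      unfolding B_def
    proof (rule Bochner_Integration.integral_mono[OF iTe i2])
      fix t :: real
      show "(1 - ind t) * exp (- t\<^sup>2 / \<epsilon>) \<le> \<eta> * exp (- t\<^sup>2 / (2 * \<epsilon>))"
      proof (cases "t \<in> {-1/2..1/2}")
        case True
        then show ?thesis unfolding ind_def \<eta>_def by simp
      next
        case False
        then have "\<bar>t\<bar> > 1/2" by auto
        then have "t\<^sup>2 > (1/2)\<^sup>2" by (metis abs_of_nonneg le_divide_eq_1_pos less_imp_le mult_1 power2_abs power_strict_mono zero_le_divide_1_iff zero_less_numeral zero_less_two)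
        then have t2: "t\<^sup>2 / (2 * \<epsilon>) \<ge> 1 / (8 * \<epsilon>)" using eps by (simp add: field_simps)
        have "exp (- t\<^sup>2 / \<epsilon>) = exp (- t\<^sup>2 / (2 * \<epsilon>)) * exp (- t\<^sup>2 / (2 * \<epsilon>))"
          by (simp add: exp_add[symmetric] field_simps)
        also have "\<dots> \<le> \<eta> * exp (- t\<^sup>2 / (2 * \<epsilon>))"
          unfolding \<eta>_def using t2 by (intro mult_right_mono) auto
        finally show ?thesis using False unfolding ind_def by simp
      qed
    qed
    also have "\<dots> = \<eta> * sqrt (pi * (2 * \<epsilon>))"
      using gauss_real(2)[of "2 * \<epsilon>"] eps by simp
    also have "\<dots> = sqrt 2 * \<eta> * G"
      unfolding G_def by (simp add: real_sqrt_mult mult_ac)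
    finally show ?thesis .
  qed
  show "Z1 \<ge> G - sqrt 2 * \<eta> * G" using ZB Bbound by simp
  have "N - complex_of_real (Z1 * e) = complex_of_real (B * e) - T"
  proof -
    have "N = complex_of_real ((Z1 + B) * e) - T" using NT ZB by (simp add: algebra_simps)
    then show ?thesis by (simp add: algebra_simps)
  qed
  then have "norm (N - complex_of_real (Z1 * e)) \<le> norm (complex_of_real (B * e)) + norm T"
    by (simp add: norm_triangle_ineq4)
  also have "\<dots> \<le> B + B"
  proof -
    have B0: "0 \<le> B" using TB norm_ge_zero order_trans by blast
    have "norm (complex_of_real (B * e)) = B * e" using B0 e by (simp only: norm_of_real abs_of_nonneg mult_nonneg_nonneg)
    also have "\<dots> \<le> B" using B0 e by (simp add: mult_left_le)
    finally show ?thesis using TB by simp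
  qed
  also have "\<dots> \<le> 2 * sqrt 2 * \<eta> * G" using Bbound by simp
  finally show "norm (N - complex_of_real (Z1 * exp (- (pi\<^sup>2) * \<epsilon> * m\<^sup>2))) \<le> 2 * sqrt 2 * \<eta> * G"
    unfolding e_def .
qed


lemma norm_sq_vec: "(norm (w :: real ^ 'd))\<^sup>2 = (\<Sum>i\<in>UNIV. (w $ i)\<^sup>2)"
  unfolding power2_norm_eq_inner inner_vec_def by (simp add: power2_eq_square)

lemma exp_norm_prod: "exp (- (norm (w :: real ^ 'd))\<^sup>2 / \<epsilon>) = (\<Prod>i\<in>UNIV. exp (- (w $ i)\<^sup>2 / \<epsilon>))"
  unfolding norm_sq_vec by (simp add: exp_sum[symmetric] sum_negf sum_divide_distrib)

definition gfun :: "real \<Rightarrow> real \<Rightarrow> real \<Rightarrow> complex" where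
  "gfun \<epsilon> m t = exp (2 * pi * \<i> * complex_of_real (m * t)) * complex_of_real (exp (- t\<^sup>2 / \<epsilon>))"

lemma continuous_gfun: "continuous_on A (gfun \<epsilon> m)"
  unfolding gfun_def divide_inverse by (intro continuous_intros)

lemma C_prod:
  fixes k :: "real ^ 'd"
  shows "integral\<^sup>L (lebesgue_on cube) (\<lambda>w. fourier_mode (-k) w * complex_of_real (Kern \<epsilon> w))
    = (\<Prod>i\<in>UNIV. integral\<^sup>L lborel (\<lambda>t. indicator {-1/2..1/2} t *\<^sub>R gfun \<epsilon> (- k $ i) t))
      / complex_of_real (Zeps \<epsilon> TYPE('d))"
proof -
  have eq: "fourier_mode (-k) w * complex_of_real (Kern \<epsilon> w)
      = (\<Prod>i\<in>UNIV. gfun \<epsilon> (- k $ i) (w $ i)) / complex_of_real (Zeps \<epsilon> TYPE('d))"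
    if "w \<in> space (lebesgue_on cube)" for w :: "real ^ 'd"
  proof -
    have "w \<in> ccube" using that cube_subset_ccube by auto
    then have "Kern \<epsilon> w = exp (- (norm w)\<^sup>2 / \<epsilon>) / Zeps \<epsilon> TYPE('d)"
      unfolding Kern_def by (simp add: rho_ccube)
    then show ?thesis
      unfolding fourier_mode_prod exp_norm_prod gfun_def
      by (simp add: prod.distrib of_real_prod)
  qed
  have "integral\<^sup>L (lebesgue_on cube) (\<lambda>w. fourier_mode (-k) w * complex_of_real (Kern \<epsilon> w))
      = integral\<^sup>L (lebesgue_on cube) (\<lambda>w. (\<Prod>i\<in>UNIV. gfun \<epsilon> (- k $ i) (w $ i)) / complex_of_real (Zeps \<epsilon> TYPE('d)))"
    by (rule Bochner_Integration.integral_cong[OF refl eq])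
  also have "\<dots> = integral\<^sup>L (lebesgue_on cube) (\<lambda>w. (\<Prod>i\<in>UNIV. gfun \<epsilon> (- k $ i) (w $ i))) / complex_of_real (Zeps \<epsilon> TYPE('d))"
    by simp
  also have "integral\<^sup>L (lebesgue_on cube) (\<lambda>w::real^'d. (\<Prod>i\<in>UNIV. gfun \<epsilon> (- k $ i) (w $ i)))
      = (\<Prod>i\<in>UNIV. integral\<^sup>L lborel (\<lambda>t. indicator {-1/2..1/2} t *\<^sub>R gfun \<epsilon> (- k $ i) t))"
    unfolding cube_hbox by (rule hbox_prod_integral(2)) (rule continuous_gfun)
  finally show ?thesis .
qed

lemma scaled_cube:
  assumes c: "c > 0"
  shows "(\<lambda>x. c *\<^sub>R x) ` (cube :: (real ^ 'd) set) = hbox (- c / 2) (c / 2)"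
proof
  show "(\<lambda>x. c *\<^sub>R x) ` (cube :: (real ^ 'd) set) \<subseteq> hbox (- c / 2) (c / 2)"
  proof
    fix x assume "x \<in> (\<lambda>x. c *\<^sub>R x) ` (cube :: (real ^ 'd) set)"
    then obtain y :: "real^'d" where y: "y \<in> cube" "x = c *\<^sub>R y" by blast
    have "c * (-1/2) < c * y $ i \<and> c * y $ i \<le> c * (1/2)" for i
    proof -
      have "-1/2 < y $ i" "y $ i \<le> 1/2" using y(1) by (auto simp: cube_def)
      then show ?thesis using mult_strict_left_mono[of "-1/2" "y $ i" c] mult_left_mono[of "y $ i" "1/2" c] c by simp
    qed
    then show "x \<in> hbox (- c / 2) (c / 2)" using y(2) by (auto simp: hbox_def)
  qed
  show "hbox (- c / 2) (c / 2) \<subseteq> (\<lambda>x. c *\<^sub>R x) ` (cube :: (real ^ 'd) set)"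
  proof
    fix x :: "real ^ 'd" assume x: "x \<in> hbox (- c / 2) (c / 2)"
    have "(inverse c) *\<^sub>R x \<in> cube"
      using x c by (auto simp: cube_def hbox_def field_simps)
    moreover have "x = c *\<^sub>R ((inverse c) *\<^sub>R x)" using c by simp
    ultimately show "x \<in> (\<lambda>x. c *\<^sub>R x) ` cube" by blast
  qed
qed

lemma Zeps_prod:
  assumes eps: "\<epsilon> > 0"
  shows "Zeps \<epsilon> TYPE('d::finite) = (integral\<^sup>L lborel (\<lambda>t. indicator {-1/2..1/2} t * exp (- t\<^sup>2 / \<epsilon>))) ^ CARD('d)"
proof -
  define c where "c = \<epsilon> powr (-1/2)"
  have c: "c > 0" using eps by (simp add: c_def)
  have c2: "c\<^sup>2 = 1 / \<epsilon>" using eps by (simp add: c_def power2_eq_square powr_add[symmetric] powr_minus_divide)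
  define Z1 where "Z1 = integral\<^sup>L lborel (\<lambda>t. indicator {-1/2..1/2} t * exp (- t\<^sup>2 / \<epsilon>))"
  have I1: "integral\<^sup>L lborel (\<lambda>t. indicator {-c/2..c/2} t * exp (- t\<^sup>2)) = c * Z1"
  proof -
    have "integral\<^sup>L lborel (\<lambda>t. indicator {-c/2..c/2} t * exp (- t\<^sup>2))
        = \<bar>c\<bar> *\<^sub>R integral\<^sup>L lborel (\<lambda>u. indicator {-c/2..c/2} (0 + c * u) * exp (- (0 + c * u)\<^sup>2))"
      by (rule lborel_integral_real_affine) (use c in auto)
    also have "(\<lambda>u. indicator {-c/2..c/2} (0 + c * u) * exp (- (0 + c * u)\<^sup>2))
        = (\<lambda>u. indicator {-1/2..1/2} u * exp (- u\<^sup>2 / \<epsilon>) :: real)"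
    proof
      fix u :: real
      have a: "(c * (-1/2) \<le> c * u) = (-1/2 \<le> u)" by (rule mult_le_cancel_left_pos[OF c])
      have b: "(c * u \<le> c * (1/2)) = (u \<le> 1/2)" by (rule mult_le_cancel_left_pos[OF c])
      have "indicator {-c/2..c/2} (c * u) = (indicator {-1/2..1/2} u :: real)"
        using a b by (simp add: indicator_def)
      moreover have "(c * u)\<^sup>2 = u\<^sup>2 / \<epsilon>" using c2 by (simp add: power_mult_distrib)
      ultimately show "indicator {-c/2..c/2} (0 + c * u) * exp (- (0 + c * u)\<^sup>2) = indicator {-1/2..1/2} u * exp (- u\<^sup>2 / \<epsilon>)"
        by simp
    qed
    finally show ?thesis using c by (simp add: Z1_def)
  qed
  define S where "S = (\<lambda>x. \<epsilon> powr (-1/2) *\<^sub>R x) ` (cube :: (real ^ 'd) set)"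
  have S: "S = hbox (- c / 2) (c / 2)" unfolding S_def c_def[symmetric] by (rule scaled_cube[OF c])
  have "complex_of_real (integral\<^sup>L (lebesgue_on S) (\<lambda>\<zeta>::real^'d. exp (- (norm \<zeta>)\<^sup>2)))
      = integral\<^sup>L (lebesgue_on (hbox (- c / 2) (c / 2))) (\<lambda>\<zeta>::real^'d. \<Prod>i\<in>UNIV. complex_of_real (exp (- (\<zeta> $ i)\<^sup>2)))"
    unfolding S integral_complex_of_real[symmetric] exp_norm_prod[of _ 1, simplified] by (simp add: of_real_prod)
  also have "\<dots> = (\<Prod>i\<in>(UNIV::'d set). integral\<^sup>L lborel (\<lambda>t. indicator {-c/2..c/2} t *\<^sub>R complex_of_real (exp (- t\<^sup>2))))"
    by (rule hbox_prod_integral(2)) (intro continuous_intros)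
  also have "\<dots> = (\<Prod>i\<in>(UNIV::'d set). complex_of_real (c * Z1))"
  proof (intro prod.cong refl)
    fix i
    have "integral\<^sup>L lborel (\<lambda>t. indicator {-c/2..c/2} t *\<^sub>R complex_of_real (exp (- t\<^sup>2)))
        = integral\<^sup>L lborel (\<lambda>t. complex_of_real (indicator {-c/2..c/2} t * exp (- t\<^sup>2)))"
      by (simp add: scaleR_conv_of_real)
    also have "\<dots> = complex_of_real (c * Z1)" by (subst integral_complex_of_real) (simp only: I1)
    finally show "integral\<^sup>L lborel (\<lambda>t. indicator {-c/2..c/2} t *\<^sub>R complex_of_real (exp (- t\<^sup>2))) = complex_of_real (c * Z1)" .
  qed
  also have "\<dots> = complex_of_real ((c * Z1) ^ CARD('d))" by simp
  finally have "integral\<^sup>L (lebesgue_on S) (\<lambda>\<zeta>::real^'d. exp (- (norm \<zeta>)\<^sup>2)) = (c * Z1) ^ CARD('d)"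
    by (simp only: of_real_eq_iff)
  then have "Zeps \<epsilon> TYPE('d) = \<epsilon> powr (real CARD('d) / 2) * (c * Z1) ^ CARD('d)"
    unfolding Zeps_def S_def by simp
  also have "\<epsilon> powr (real CARD('d) / 2) = (\<epsilon> powr (1/2)) ^ CARD('d)"
    using eps by (simp add: powr_realpow[symmetric] powr_powr)
  also have "(\<epsilon> powr (1/2)) ^ CARD('d) * (c * Z1) ^ CARD('d) = (\<epsilon> powr (1/2) * c) ^ CARD('d) * Z1 ^ CARD('d)"
    by (simp add: power_mult_distrib)
  also have "\<epsilon> powr (1/2) * c = 1" using eps by (simp add: c_def powr_add[symmetric])
  finally show ?thesis by (simp add: Z1_def)
qed


lemma sqrt2_le: "sqrt 2 \<le> (3/2::real)"
  by (rule real_le_lsqrt) (auto simp: power2_eq_square)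

lemma two_mult_le_pow: "n \<ge> 1 \<Longrightarrow> 2 * n \<le> (2::nat) ^ n"
proof (induction n rule: dec_induct)
  case (step n) then show ?case by simp
qed simp

lemma prod_diff_le:
  fixes a b :: "'i \<Rightarrow> complex"
  assumes "finite A" "\<And>i. i \<in> A \<Longrightarrow> norm (a i) \<le> 1" "\<And>i. i \<in> A \<Longrightarrow> norm (b i) \<le> 1"
  shows "norm ((\<Prod>i\<in>A. a i) - (\<Prod>i\<in>A. b i)) \<le> (\<Sum>i\<in>A. norm (a i - b i))"
  using assms
proof (induction A rule: finite_induct)
  case empty
  then show ?case by simp
next
  case (insert j A)
  have bA: "norm (\<Prod>i\<in>A. b i) \<le> 1"
  proof -
    have "norm (\<Prod>i\<in>A. b i) \<le> (\<Prod>i\<in>A. norm (b i))" by (rule norm_prod_le)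
    also have "\<dots> \<le> 1" using insert.prems(2) by (intro prod_le_1) auto
    finally show ?thesis .
  qed
  have IH: "norm ((\<Prod>i\<in>A. a i) - (\<Prod>i\<in>A. b i)) \<le> (\<Sum>i\<in>A. norm (a i - b i))"
    using insert by auto
  have "(\<Prod>i\<in>insert j A. a i) - (\<Prod>i\<in>insert j A. b i)
      = a j * ((\<Prod>i\<in>A. a i) - (\<Prod>i\<in>A. b i)) + (a j - b j) * (\<Prod>i\<in>A. b i)"
    using insert.hyps by (simp add: algebra_simps)
  then have "norm ((\<Prod>i\<in>insert j A. a i) - (\<Prod>i\<in>insert j A. b i))
      \<le> norm (a j) * norm ((\<Prod>i\<in>A. a i) - (\<Prod>i\<in>A. b i)) + norm (a j - b j) * norm (\<Prod>i\<in>A. b i)"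
    by (metis norm_mult norm_triangle_ineq)
  also have "\<dots> \<le> 1 * (\<Sum>i\<in>A. norm (a i - b i)) + norm (a j - b j) * 1"
    using insert.prems IH bA by (intro add_mono mult_mono) auto
  also have "\<dots> = (\<Sum>i\<in>insert j A. norm (a i - b i))"
    using insert.hyps by simp
  finally show ?case .
qed

lemma eta_small:
  assumes eps: "\<epsilon> > 0" and small: "\<epsilon> < 1 / (8 * (real n + 2) * ln 2)" and n: "n \<ge> 1"
  shows "exp (- 1 / (8 * \<epsilon>)) \<le> 1/8"
proof -
  have l2: "ln 2 > (0::real)" by simp
  have X: "8 * (real n + 2) * ln 2 > 0" using l2 by simp
  have "\<epsilon> * (8 * (real n + 2) * ln 2) < 1" using small X by (simp add: less_divide_eq)
  then have "(real n + 2) * ln 2 < 1 / (8 * \<epsilon>)" using eps by (simp add: field_simps)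
  moreover have "3 * ln 2 \<le> (real n + 2) * ln 2" using l2 n by (intro mult_right_mono) auto
  ultimately have "3 * ln 2 < 1 / (8 * \<epsilon>)" by linarith
  then have "- 1 / (8 * \<epsilon>) < - (3 * ln 2)" by simp
  then have "exp (- 1 / (8 * \<epsilon>)) < exp (- (3 * ln 2))" by simp
  also have "exp (- (3 * ln 2)) = (1/8::real)"
  proof -
    have "3 * ln (2::real) = ln 8" using ln_realpow[of 2 3] by simp
    then show ?thesis by (simp add: exp_minus)
  qed
  finally show ?thesis by simp
qed

lemma final_est:
  fixes \<theta> k :: "real ^ 'd"
  assumes eps: "\<epsilon> > 0" and small: "\<epsilon> < 1 / (8 * (real CARD('d) + 2) * ln 2)"
    and N_def: "N = (\<lambda>i. integral\<^sup>L lborel (\<lambda>t. indicator {-1/2..1/2} t *\<^sub>R gfun \<epsilon> (- k $ i) t))"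
    and Z1_def: "Z1 = integral\<^sup>L lborel (\<lambda>t. indicator {-1/2..1/2} t * exp (- t\<^sup>2 / \<epsilon>))"
  shows "cmod (fourier_mode (-k) \<theta> * ((\<Prod>i\<in>UNIV. N i) / complex_of_real (Z1 ^ CARD('d)))
           - complex_of_real (exp (- (pi\<^sup>2) * \<epsilon> * (norm k)\<^sup>2)) * exp (- 2 * pi * \<i> * complex_of_real (k \<bullet> \<theta>)))
         \<le> 2 ^ (CARD('d) + 1) * exp (- 1 / (8 * \<epsilon>))"
proof -
  define d where "d = CARD('d)"
  define \<eta> where "\<eta> = exp (- 1 / (8 * \<epsilon>))"
  define G where "G = sqrt (pi * \<epsilon>)"
  define e where "e i = exp (- (pi\<^sup>2) * \<epsilon> * (k $ i)\<^sup>2)" for i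
  have d1: "d \<ge> 1" unfolding d_def by (simp add: Suc_leI)
  have eta: "\<eta> \<le> 1/8" "0 < \<eta>" unfolding \<eta>_def using eta_small[OF eps small] by (auto simp: d_def)
  have G: "G > 0" unfolding G_def using eps by simp
  have s2: "sqrt 2 \<le> (3/2::real)" by (rule sqrt2_le)
  have ob: "norm (N i) \<le> Z1 \<and> norm (N i - complex_of_real (Z1 * e i)) \<le> 2 * sqrt 2 * \<eta> * G
      \<and> Z1 \<ge> G - sqrt 2 * \<eta> * G" for i
  proof -
    have Ni: "N i = integral\<^sup>L lborel (\<lambda>t. indicator {-1/2..1/2} t *\<^sub>R
        (\<lambda>t. exp (2 * pi * \<i> * complex_of_real ((- k $ i) * t)) * complex_of_real (exp (- t\<^sup>2 / \<epsilon>))) t)"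
      by (simp add: N_def gfun_def)
    show ?thesis
      using one_d_bound[OF eps refl Ni Z1_def G_def \<eta>_def] by (simp add: e_def)
  qed
  have s2eta: "sqrt 2 * \<eta> \<le> 3/16"
    using mult_mono[OF s2 eta(1)] eta(2) by simp
  have Z1pos: "Z1 \<ge> (3/4) * G"
  proof -
    have "sqrt 2 * \<eta> * G \<le> 3/16 * G" using s2eta G by (intro mult_right_mono) auto
    then show ?thesis using ob[of undefined] G by linarith
  qed
  have Z1p: "Z1 > 0" using Z1pos G by linarith
  have bi: "norm (N i / complex_of_real Z1 - complex_of_real (e i)) \<le> 4 * \<eta>" for i
  proof -
    have "N i / complex_of_real Z1 - complex_of_real (e i) = (N i - complex_of_real (Z1 * e i)) / complex_of_real Z1"
      using Z1p by (simp add: field_simps)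
    then have "norm (N i / complex_of_real Z1 - complex_of_real (e i)) = norm (N i - complex_of_real (Z1 * e i)) / Z1"
      using Z1p by (simp add: norm_divide)
    also have "\<dots> \<le> (3 * \<eta> * G) / ((3/4) * G)"
    proof (rule frac_le)
      have "2 * sqrt 2 * \<eta> * G \<le> 2 * (3/2) * \<eta> * G" using s2 eta G by (intro mult_right_mono) auto
      then show "norm (N i - complex_of_real (Z1 * e i)) \<le> 3 * \<eta> * G" using ob[of i] by simp
    qed (use G eta Z1pos in auto)
    also have "\<dots> = 4 * \<eta>" using G by (simp add: field_simps)
    finally show ?thesis .
  qed
  have nN: "norm (N i / complex_of_real Z1) \<le> 1" for i
    using ob[of i] Z1p by (simp add: norm_divide)
  have ne: "norm (complex_of_real (e i)) \<le> 1" for i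
    unfolding e_def using eps by simp
  define p where "p = exp (- 2 * pi * \<i> * complex_of_real (k \<bullet> \<theta>))"
  have p: "fourier_mode (-k) \<theta> = p" "norm p = 1"
    unfolding p_def fourier_mode_def by (simp_all add: norm_exp_i_times mult.commute[of _ \<i>] mult.assoc)
  have ek: "exp (- (pi\<^sup>2) * \<epsilon> * (norm k)\<^sup>2) = (\<Prod>i\<in>UNIV. e i)"
    unfolding norm_sq_vec e_def by (simp add: exp_sum[symmetric] sum_distrib_left)
  have NZ: "(\<Prod>i\<in>UNIV. N i) / complex_of_real (Z1 ^ CARD('d)) = (\<Prod>i\<in>UNIV. N i / complex_of_real Z1)"
    by (simp add: prod_dividef)
  have "cmod (fourier_mode (-k) \<theta> * ((\<Prod>i\<in>UNIV. N i) / complex_of_real (Z1 ^ CARD('d)))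
           - complex_of_real (exp (- (pi\<^sup>2) * \<epsilon> * (norm k)\<^sup>2)) * exp (- 2 * pi * \<i> * complex_of_real (k \<bullet> \<theta>)))
      = cmod (p * ((\<Prod>i\<in>UNIV. N i / complex_of_real Z1) - (\<Prod>i\<in>UNIV. complex_of_real (e i))))"
    unfolding p(1) NZ ek p_def[symmetric] by (simp add: algebra_simps of_real_prod)
  also have "\<dots> = cmod ((\<Prod>i\<in>UNIV. N i / complex_of_real Z1) - (\<Prod>i\<in>UNIV. complex_of_real (e i)))"
    by (simp add: norm_mult p(2))
  also have "\<dots> \<le> (\<Sum>i\<in>UNIV. norm (N i / complex_of_real Z1 - complex_of_real (e i)))"
    by (rule prod_diff_le) (simp, rule nN, rule ne)
  also have "\<dots> \<le> (\<Sum>i\<in>(UNIV::'d set). 4 * \<eta>)"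
    by (intro sum_mono bi)
  also have "\<dots> = real d * (4 * \<eta>)" by (simp add: d_def)
  also have "\<dots> \<le> 2 ^ (d + 1) * \<eta>"
  proof -
    have "2 * d \<le> 2 ^ d" by (rule two_mult_le_pow[OF d1])
    then have "real (2 * d) \<le> real (2 ^ d)" by (simp only: of_nat_le_iff)
    then have "2 * real d \<le> 2 ^ d" by simp
    then have "real d * 4 \<le> 2 ^ (d + 1)" by simp
    then show ?thesis using eta(2) by (simp add: mult.assoc[symmetric] mult_right_mono)
  qed
  finally show ?thesis unfolding d_def \<eta>_def .
qed



theorem proposition5p1:
  fixes \<theta> :: "real ^ 'd"
  assumes "\<forall>i. \<bar>\<theta> $ i\<bar> < 1/2"
  shows "(\<forall>h :: real ^ 'd \<Rightarrow> complex.
            h \<in> borel_measurable (lebesgue_on cube)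
          \<and> integrable (lebesgue_on cube) (\<lambda>x. (norm (h x))\<^sup>2)
          \<and> (\<forall>k\<in>int_lattice. (LINT x|lebesgue_on cube. h x * cnj (fourier_mode k x)) = 0)
          \<longrightarrow> (AE x in lebesgue_on cube. h x = 0))
       \<and> (\<forall>\<epsilon>>0. \<forall>k\<in>int_lattice. \<exists>lam::complex.
            (\<forall>y. Teps \<epsilon> \<theta> (fourier_mode k) y = lam * fourier_mode k y)
          \<and> (\<epsilon> < 1 / (8 * (real CARD('d) + 2) * ln 2) \<longrightarrow>
               cmod (lam - complex_of_real (exp (- (pi\<^sup>2) * \<epsilon> * (norm k)\<^sup>2))
                        * exp (- 2 * pi * \<i> * complex_of_real (k \<bullet> \<theta>)))
               \<le> 2 ^ (CARD('d) + 1) * exp (- 1 / (8 * \<epsilon>))))"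
proof -
  have part1: "\<forall>h :: real ^ 'd \<Rightarrow> complex.
            h \<in> borel_measurable (lebesgue_on cube)
          \<and> integrable (lebesgue_on cube) (\<lambda>x. (norm (h x))\<^sup>2)
          \<and> (\<forall>k\<in>int_lattice. (LINT x|lebesgue_on cube. h x * cnj (fourier_mode k x)) = 0)
          \<longrightarrow> (AE x in lebesgue_on cube. h x = 0)"
    using fourier_complete by blast
  have part2: "\<forall>\<epsilon>>0. \<forall>k\<in>int_lattice. \<exists>lam::complex.
            (\<forall>y. Teps \<epsilon> \<theta> (fourier_mode k) y = lam * fourier_mode k y)
          \<and> (\<epsilon> < 1 / (8 * (real CARD('d) + 2) * ln 2) \<longrightarrow>
               cmod (lam - complex_of_real (exp (- (pi\<^sup>2) * \<epsilon> * (norm k)\<^sup>2))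
                        * exp (- 2 * pi * \<i> * complex_of_real (k \<bullet> \<theta>)))
               \<le> 2 ^ (CARD('d) + 1) * exp (- 1 / (8 * \<epsilon>)))"
  proof (intro allI impI ballI)
    fix \<epsilon> :: real and k :: "real ^ 'd"
    assume eps: "\<epsilon> > 0" and k: "k \<in> int_lattice"
    define N where "N = (\<lambda>i. integral\<^sup>L lborel (\<lambda>t. indicator {-1/2..1/2} t *\<^sub>R gfun \<epsilon> (- k $ i) t))"
    define Z1 where "Z1 = integral\<^sup>L lborel (\<lambda>t. indicator {-1/2..1/2} t * exp (- t\<^sup>2 / \<epsilon>))"
    define lam where "lam = fourier_mode (-k) \<theta> * ((\<Prod>i\<in>UNIV. N i) / complex_of_real (Z1 ^ CARD('d)))"
    have C: "integral\<^sup>L (lebesgue_on cube) (\<lambda>w. fourier_mode (-k) w * complex_of_real (Kern \<epsilon> w))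
        = (\<Prod>i\<in>UNIV. N i) / complex_of_real (Z1 ^ CARD('d))"
      unfolding C_prod Zeps_prod[OF eps] N_def Z1_def ..
    have eig: "\<forall>y. Teps \<epsilon> \<theta> (fourier_mode k) y = lam * fourier_mode k y"
      by (simp only: eigen_relation[OF k] C lam_def) simp
    have est: "\<epsilon> < 1 / (8 * (real CARD('d) + 2) * ln 2) \<longrightarrow>
               cmod (lam - complex_of_real (exp (- (pi\<^sup>2) * \<epsilon> * (norm k)\<^sup>2))
                        * exp (- 2 * pi * \<i> * complex_of_real (k \<bullet> \<theta>)))
               \<le> 2 ^ (CARD('d) + 1) * exp (- 1 / (8 * \<epsilon>))"
      using final_est[OF eps _ N_def Z1_def, of \<theta>] unfolding lam_def by blast
    show "\<exists>lam::complex.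
            (\<forall>y. Teps \<epsilon> \<theta> (fourier_mode k) y = lam * fourier_mode k y)
          \<and> (\<epsilon> < 1 / (8 * (real CARD('d) + 2) * ln 2) \<longrightarrow>
               cmod (lam - complex_of_real (exp (- (pi\<^sup>2) * \<epsilon> * (norm k)\<^sup>2))
                        * exp (- 2 * pi * \<i> * complex_of_real (k \<bullet> \<theta>)))
               \<le> 2 ^ (CARD('d) + 1) * exp (- 1 / (8 * \<epsilon>)))"
      using eig est by blast
  qed
  show ?thesis using part1 part2 by blast
qed

end
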